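(* Let $P$ be a finite graded bowtie-free poset of rank $n$ with $\hat0,\hat1$ and a good $\mathcal{H}_n(0)$ action $U_1,\dots,U_{n-1}$. Then for every $S\subseteq[n-1]$, $\alpha_P(S)$ equals the number of maximal chains of $P$ whose descent set is contained in $S$. In particular, $P$ has exactly one maximal chain with empty descent set.
   Context: Bowtie-free: no distinct $a,b,c,d$ with $a$ and $b$ each covering both $c$ and $d$. A good $\mathcal{H}_n(0)$ action is a family $U_1,\dots,U_{n-1}$ of maps on the set $\mathcal{M}(P)$ of maximal chains with: (1) $U_i(\mathfrak m)$ agrees with $\mathfrak m$ except possibly at rank $i$; (2) $U_i^2=U_i$; (3) $U_iU_j=U_jU_i$ for $|i-j|\ge2$; (4) $U_iU_{i+1}U_i=U_{i+1}U_iU_{i+1}$; (5) $\omega F_P(x)=\mathrm{ch}(\chi_P)$, where $\chi_P$ is the character of the representation of $\mathcal{H}_n(0)$ (generated by $T_i$ with $T_i^2=-T_i$ and the commutation/braid relations) on $\mathbb{C}\mathcal{M}(P)$ with $T_i$ acting as $-U_i$; $F_P(x)=\sum x_1^{\mathrm{rk}(t_0,t_1)}\cdots x_k^{\mathrm{rk}(t_{k-1},t_k)}$ over multichains $\hat0=t_0\le\cdots\le t_{k-1}<t_k=\hat1$; $L_{S,n}=\sum_{1\le i_1\le\cdots\le i_n,\ i_j<i_{j+1}\ (j\in S)}x_{i_1}\cdots x_{i_n}$; $\omega(L_{S,n})=L_{[n-1]\setminus S,n}$; $\mathrm{ch}$ linear with $\mathrm{ch}(\chi_S)=L_{S,n}$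 for $\chi_S$ the character of the one-dimensional representation $T_i\mapsto-1$ ($i\in S$), $T_i\mapsto0$ ($i\notin S$). The descent set of a maximal chain $\mathfrak m$ is $\{i\in[n-1]:U_i(\mathfrak m)\ne\mathfrak m\}$. The flag $f$-vector $\alpha_P(S)$ is the number of chains $\hat0<t_1<\cdots<t_{|S|}<\hat1$ with $\{\mathrm{rk}(t_1),\dots,\mathrm{rk}(t_{|S|})\}=S$. *)

theory Defs
  imports Main
begin

(* Finite posets are modelled as a carrier set P inside a type with an order. *)

definition is_chain :: "'a::order set \<Rightarrow> 'a set \<Rightarrow> bool" where
  "is_chain P C \<longleftrightarrow> C \<subseteq> P \<and> (\<forall>x\<in>C. \<forall>y\<in>C. x \<le> y \<or> y \<le> x)"

definition maximal_chain :: "'a::order set \<Rightarrow> 'a set \<Rightarrow> bool" where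
  "maximal_chain P C \<longleftrightarrow> is_chain P C \<and> (\<forall>D. is_chain P D \<and> C \<subseteq> D \<longrightarrow> D = C)"

definition MC :: "'a::order set \<Rightarrow> 'a set set" where
  "MC P = {C. maximal_chain P C}"

definition covers :: "'a::order set \<Rightarrow> 'a \<Rightarrow> 'a \<Rightarrow> bool" where
  "covers P y x \<longleftrightarrow> x \<in> P \<and> y \<in> P \<and> x < y \<and> \<not> (\<exists>z\<in>P. x < z \<and> z < y)"

(* finite poset with bottom bt and tp tp, graded of rank n:
   every maximal chain has length n, i.e. n+1 elements *)
definition graded_bounded :: "'a::order set \<Rightarrow> nat \<Rightarrow> 'a \<Rightarrow> 'a \<Rightarrow> bool" where
  "graded_bounded P n bt tp \<longleftrightarrow> finite P \<and> bt \<in> P \<and> tp \<in> P \<and>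
     (\<forall>x\<in>P. bt \<le> x \<and> x \<le> tp) \<and> (\<forall>C\<in>MC P. card C = n + 1)"

definition bowtie_free :: "'a::order set \<Rightarrow> bool" where
  "bowtie_free P \<longleftrightarrow> \<not> (\<exists>a b c d. distinct [a, b, c, d] \<and>
      covers P a c \<and> covers P a d \<and> covers P b c \<and> covers P b d)"

definition rk :: "'a::order set \<Rightarrow> 'a \<Rightarrow> nat" where
  "rk P x = Max {card C | C. is_chain P C \<and> (\<forall>y\<in>C. y \<le> x)} - 1"

definition Des :: "nat \<Rightarrow> (nat \<Rightarrow> 'a set \<Rightarrow> 'a set) \<Rightarrow> 'a set \<Rightarrow> nat set" where
  "Des n U m = {i \<in> {1..<n}. U i m \<noteq> m}"

definition flag_f :: "'a::order set \<Rightarrow> 'a \<Rightarrow> 'a \<Rightarrow> nat set \<Rightarrow> nat" where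
  "flag_f P bt tp S = card {T. is_chain P T \<and> (\<forall>t\<in>T. bt < t \<and> t < tp)
       \<and> card T = card S \<and> rk P ` T = S}"

(* Formal power series in the variables x_1, x_2, ... with integer coefficients:
   a monomial is an exponent vector e :: nat => nat (e i = exponent of x_i, e 0 = 0),
   a series is its coefficient function. *)
type_synonym qseries = "(nat \<Rightarrow> nat) \<Rightarrow> int"

definition Lfun :: "nat set \<Rightarrow> nat \<Rightarrow> qseries" where
  "Lfun S n e = int (card {i :: nat list. length i = n \<and> (\<forall>j<n. 1 \<le> i ! j) \<and> sorted i
       \<and> (\<forall>j\<in>S. 1 \<le> j \<and> j < n \<longrightarrow> i ! (j - 1) < i ! j)
       \<and> (\<forall>k. count_list i k = e k)})"

definition FP :: "'a::order set \<Rightarrow> 'a \<Rightarrow> 'a \<Rightarrow> qseries" where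
  "FP P bt tp e = int (card {ts. \<exists>k\<ge>1. length ts = k + 1 \<and> set ts \<subseteq> P
       \<and> ts ! 0 = bt \<and> ts ! k = tp
       \<and> (\<forall>j. j + 1 < k \<longrightarrow> ts ! j \<le> ts ! (j + 1)) \<and> ts ! (k - 1) < ts ! k
       \<and> e 0 = 0 \<and> (\<forall>j\<in>{1..k}. e j = rk P (ts ! j) - rk P (ts ! (j - 1)))
       \<and> (\<forall>j>k. e j = 0)})"

definition omega :: "nat \<Rightarrow> qseries \<Rightarrow> qseries" where
  "omega n F = (THE G. \<exists>d :: nat set \<Rightarrow> int.
       F = (\<lambda>e. \<Sum>S\<in>Pow {1..<n}. d S * Lfun S n e) \<and>
       G = (\<lambda>e. \<Sum>S\<in>Pow {1..<n}. d S * Lfun ({1..<n} - S) n e))"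

(* Characters of H_n(0)-representations, as functions on words: the value on
   the word [i_1,...,i_k] is the trace of T_{i_1} ... T_{i_k}.  Words with a
   letter outside [n-1] get value 0 (they are not elements of H_n(0)). *)
type_synonym hchar = "nat list \<Rightarrow> int"

definition chiS :: "nat \<Rightarrow> nat set \<Rightarrow> hchar" where
  "chiS n S w = (if set w \<subseteq> {1..<n} then (\<Prod>i\<leftarrow>w. if i \<in> S then -1 else 0) else 0)"

(* character of C M(P) with T_i acting as -U_i: the trace of the linear
   extension of a map f on the basis M equals the number of fixed points *)
definition chiP :: "nat \<Rightarrow> (nat \<Rightarrow> 'a set \<Rightarrow> 'a set) \<Rightarrow> 'a set set \<Rightarrow> hchar" where
  "chiP n U M w = (if set w \<subseteq> {1..<n} then
      (-1) ^ length w * int (card {m \<in> M. foldr (\<lambda>i f. U i \<circ> f) w id m = m}) else 0)"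

definition ch :: "nat \<Rightarrow> hchar \<Rightarrow> qseries" where
  "ch n \<chi> = (THE G. \<exists>c :: nat set \<Rightarrow> int.
       \<chi> = (\<lambda>w. \<Sum>S\<in>Pow {1..<n}. c S * chiS n S w) \<and>
       G = (\<lambda>e. \<Sum>S\<in>Pow {1..<n}. c S * Lfun S n e))"

definition good_action :: "'a::order set \<Rightarrow> nat \<Rightarrow> 'a \<Rightarrow> 'a \<Rightarrow> (nat \<Rightarrow> 'a set \<Rightarrow> 'a set) \<Rightarrow> bool" where
  "good_action P n bt tp U \<longleftrightarrow>
     (\<forall>i\<in>{1..<n}. \<forall>m\<in>MC P. U i m \<in> MC P \<and>
         {x \<in> m. rk P x \<noteq> i} = {x \<in> U i m. rk P x \<noteq> i}) \<and>
     (\<forall>i\<in>{1..<n}. \<forall>m\<in>MC P. U i (U i m) = U i m) \<and>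
     (\<forall>i\<in>{1..<n}. \<forall>j\<in>{1..<n}. \<forall>m\<in>MC P. (i + 2 \<le> j \<or> j + 2 \<le> i) \<longrightarrow> U i (U j m) = U j (U i m)) \<and>
     (\<forall>i. 1 \<le> i \<and> i + 1 < n \<longrightarrow> (\<forall>m\<in>MC P. U i (U (i+1) (U i m)) = U (i+1) (U i (U (i+1) m)))) \<and>
     omega n (FP P bt tp) = ch n (chiP n U (MC P))"

end

theory Submission
  imports Defs "HOL-Library.Multiset"
begin

definition step :: "nat \<Rightarrow> nat \<Rightarrow> nat list \<times> nat" where
  "step j i = (if Suc i = j then ([], i) else if i = j then ([], j)
     else if j < i then ([i - 1], j) else ([i], j))"

fun run :: "nat \<Rightarrow> nat list \<Rightarrow> nat list \<times> nat" where
  "run j [] = ([], j)"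
| "run j (i # v) = (let (u1, j1) = step j i; (u2, j2) = run j1 v in (u1 @ u2, j2))"

definition sh :: "nat \<Rightarrow> nat list \<Rightarrow> nat list" where
  "sh a v = map (\<lambda>i. if a < i then i - 1 else i) (filter (\<lambda>i. i \<noteq> a) v)"

definition pw :: "nat \<Rightarrow> nat list \<Rightarrow> nat list" where
  "pw N w = concat (replicate N w)"

lemma pw_Suc: "pw (Suc N) w = pw N w @ w"
  unfolding pw_def by (induct N) auto

lemma pw_Suc': "pw (Suc N) w = w @ pw N w"
  unfolding pw_def by simp

lemma pw_add: "pw (N + M) w = pw N w @ pw M w"
  unfolding pw_def by (simp add: replicate_add)

lemma pw_map_filter: "map f (filter P (pw M w)) = pw M (map f (filter P w))"
  unfolding pw_def by (induct M) auto

locale hk =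
  fixes e :: "nat \<Rightarrow> 'x \<Rightarrow> 'x" and n :: nat
  assumes idem: "i \<in> {1..<n} \<Longrightarrow> e i (e i x) = e i x"
  and comm: "i \<in> {1..<n} \<Longrightarrow> j \<in> {1..<n} \<Longrightarrow> i + 2 \<le> j \<Longrightarrow> e i (e j x) = e j (e i x)"
  and braid: "1 \<le> i \<Longrightarrow> i + 1 < n \<Longrightarrow> e i (e (i+1) (e i x)) = e (i+1) (e i (e (i+1) x))"
begin

definition ec :: "nat list \<Rightarrow> 'x \<Rightarrow> 'x" where
  "ec w = foldr (\<lambda>i f. e i \<circ> f) w id"

lemma ec_Nil[simp]: "ec [] = id" by (simp add: ec_def)
lemma ec_Cons[simp]: "ec (i # w) x = e i (ec w x)" by (simp add: ec_def)
lemma ec_append: "ec (xs @ ys) x = ec xs (ec ys x)"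
  by (induct xs) auto

definition cc :: "nat \<Rightarrow> nat \<Rightarrow> 'x \<Rightarrow> 'x" where
  "cc b j = ec (rev [j..<Suc b])"

lemma cc_top: "cc b (Suc b) x = x" by (simp add: cc_def)

lemma cc_step: "j \<le> b \<Longrightarrow> cc b j x = cc b (Suc j) (e j x)"
proof -
  assume "j \<le> b"
  then have "[j..<Suc b] = j # [Suc j..<Suc b]" by (simp add: upt_conv_Cons)
  then show ?thesis unfolding cc_def by (simp add: ec_append)
qed

lemma comm_ec:
  assumes "i \<in> {1..<n}" "set v \<subseteq> {1..<n}" "\<forall>x\<in>set v. i + 2 \<le> x \<or> x + 2 \<le> i"
  shows "e i (ec v x) = ec v (e i x)"
  using assms
proof (induct v)
  case Nil then show ?case by simp
next
  case (Cons y v)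
  have "e i (e y z) = e y (e i z)" for z
    using Cons.prems comm[of i y z] comm[of y i z] by auto
  then show ?case using Cons by simp
qed

lemma cc_comm:
  assumes "i \<in> {1..<n}" "b < n" "1 \<le> j" "i + 2 \<le> j"
  shows "cc b j (e i x) = e i (cc b j x)"
  unfolding cc_def using assms by (intro comm_ec[symmetric]) auto

lemma cc_shift:
  assumes "1 \<le> j" "b < n" "j < i" "i \<le> b"
  shows "cc b j (e i x) = e (i-1) (cc b j x)"
  using assms
proof (induction "b - j" arbitrary: j i x rule: less_induct)
  case less
  have s1: "cc b j y = cc b (Suc j) (e j y)" for y using less by (intro cc_step) auto
  show ?case
  proof (cases "i = Suc j")
    case True
    have s2: "cc b (Suc j) y = cc b (Suc (Suc j)) (e (Suc j) y)" for y
      using less True by (intro cc_step) auto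
    have br: "e (Suc j) (e j (e (Suc j) y)) = e j (e (Suc j) (e j y))" for y
      using braid[of j y] less True by simp
    have cm: "cc b (Suc (Suc j)) (e j y) = e j (cc b (Suc (Suc j)) y)" for y
      using cc_comm[of j b "Suc (Suc j)"] less True by auto
    show ?thesis using s1 s2 br cm True by simp
  next
    case False
    then have lt: "Suc j < i" using less by auto
    have cm: "e j (e i y) = e i (e j y)" for y using comm[of j i y] less lt by auto
    have ih: "cc b (Suc j) (e i y) = e (i-1) (cc b (Suc j) y)" for y
      using less.hyps[of "Suc j" i y] less lt by auto
    show ?thesis using s1 cm ih by simp
  qed
qed

lemma ec_absorb:
  assumes "\<forall>s\<in>set u. \<forall>x. e s (p x) = p x"
  shows "ec u (p x) = p x"
  using assms by (induct u) auto

context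
  fixes J :: "nat set" and a b :: nat
  assumes J: "J \<subseteq> {1..<n}" and ab: "{a..b} \<subseteq> J" "a \<le> b"
    and bmax: "\<forall>x\<in>J. x \<le> b" and a1: "a - 1 \<notin> J"
begin

lemma a_pos: "1 \<le> a"
proof -
  have "a \<in> {a..b}" using ab(2) by simp
  then have "a \<in> J" using ab(1) by (rule subsetD[rotated])
  then have "a \<in> {1..<n}" using J by (rule subsetD[rotated])
  then show ?thesis by simp
qed
lemma b_lt: "b < n"
proof -
  have "b \<in> {a..b}" using ab(2) by simp
  then have "b \<in> J" using ab(1) by (rule subsetD[rotated])
  then have "b \<in> {1..<n}" using J by (rule subsetD[rotated])
  then show ?thesis by simp
qed

lemma step_ok:
  assumes j: "a \<le> j" "j \<le> Suc b" and i: "i \<in> J"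
  shows "cc b j (e i x) = ec (fst (step j i)) (cc b (snd (step j i)) x)
     \<and> a \<le> snd (step j i) \<and> snd (step j i) \<le> j
     \<and> set (fst (step j i)) \<subseteq> {y\<in>J. Suc y < a} \<union> {a..<b}
     \<and> (Suc i = j \<longrightarrow> snd (step j i) < j)"
proof -
  have iJ: "1 \<le> i" "i < n" "i \<le> b" using i J bmax by auto
  have ap: "1 \<le> a" using a_pos .
  have bl: "b < n" using b_lt .
  show ?thesis
  proof (cases "Suc i = j")
    case True
    then have "a \<le> i" using j i a1 by (cases "j = a") auto
    then show ?thesis using True cc_step[of i b x] iJ by (simp add: step_def)
  next
    case F1: False
    show ?thesis
    proof (cases "i = j")
      case True
      then show ?thesis using F1 cc_step[of j b] idem[of j] iJ j
        by (simp add: step_def)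
    next
      case F2: False
      show ?thesis
      proof (cases "j < i")
        case True
        then show ?thesis using F1 F2 cc_shift[of j b i x] iJ j ap bl
          by (auto simp add: step_def)
      next
        case False
        then have "i + 2 \<le> j" using F1 F2 by auto
        moreover have "i \<noteq> a - 1" using i a1 by auto
        moreover have "i \<in> {y\<in>J. Suc y < a} \<union> {a..<b}"
          using i iJ \<open>i \<noteq> a - 1\<close> \<open>i + 2 \<le> j\<close> j a1 by (cases "i < a") auto
        ultimately show ?thesis using F1 F2 False cc_comm[of i b j x] iJ j ap bl
          by (auto simp add: step_def)
      qed
    qed
  qed
qed

lemma run_ok:
  assumes "set v \<subseteq> J" "a \<le> j" "j \<le> Suc b"
  shows "(\<forall>x. cc b j (ec v x) = ec (fst (run j v)) (cc b (snd (run j v)) x))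
     \<and> a \<le> snd (run j v) \<and> snd (run j v) \<le> j
     \<and> set (fst (run j v)) \<subseteq> {y\<in>J. Suc y < a} \<union> {a..<b}
     \<and> (j - 1 \<in> set v \<and> a < j \<longrightarrow> snd (run j v) < j)"
  using assms
proof (induction v arbitrary: j)
  case Nil then show ?case by (simp add: cc_def)
next
  case (Cons i v)
  obtain u1 j1 where st: "step j i = (u1, j1)" by (cases "step j i")
  obtain u2 j2 where rn: "run j1 v = (u2, j2)" by (cases "run j1 v")
  have S: "\<forall>x. cc b j (e i x) = ec u1 (cc b j1 x)" "a \<le> j1" "j1 \<le> j"
     "set u1 \<subseteq> {y\<in>J. Suc y < a} \<union> {a..<b}" "Suc i = j \<longrightarrow> j1 < j"
    using step_ok[of j i] Cons.prems st by auto
  have R: "\<forall>x. cc b j1 (ec v x) = ec u2 (cc b j2 x)" "a \<le> j2" "j2 \<le> j1"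
     "set u2 \<subseteq> {y\<in>J. Suc y < a} \<union> {a..<b}" "j1 - 1 \<in> set v \<and> a < j1 \<longrightarrow> j2 < j1"
    using Cons.IH[of j1] Cons.prems S rn by auto
  have "j - 1 \<in> set (i # v) \<and> a < j \<longrightarrow> j2 < j"
  proof
    assume h: "j - 1 \<in> set (i # v) \<and> a < j"
    show "j2 < j"
    proof (cases "j1 < j")
      case True then show ?thesis using R by auto
    next
      case False
      then have "j1 = j" using S by auto
      then show ?thesis using h R S by auto
    qed
  qed
  then show ?case using S R st rn by (auto simp add: ec_append)
qed


lemma run_a: "set v \<subseteq> J \<Longrightarrow> run a v = (sh a v, a)"
proof (induction v)
  case Nil then show ?case by (simp add: sh_def)
next
  case (Cons i v)
  have "Suc i \<noteq> a" using Cons.prems a1 by auto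
  then show ?case using Cons by (auto simp add: step_def sh_def)
qed

lemma set_sh: "set w = J \<Longrightarrow> set (sh a w) = {y\<in>J. Suc y < a} \<union> {a..<b}"
proof -
  assume w: "set w = J"
  have "set (sh a w) = (\<lambda>i. if a < i then i - 1 else i) ` (J - {a})"
    using w by (auto simp add: sh_def)
  also have "\<dots> = {y\<in>J. Suc y < a} \<union> {a..<b}"
  proof
    show "(\<lambda>i. if a < i then i - 1 else i) ` (J - {a}) \<subseteq> {y\<in>J. Suc y < a} \<union> {a..<b}"
    proof
      fix y assume "y \<in> (\<lambda>i. if a < i then i - 1 else i) ` (J - {a})"
      then obtain i where i: "i \<in> J" "i \<noteq> a" "y = (if a < i then i - 1 else i)" by blast
      show "y \<in> {y\<in>J. Suc y < a} \<union> {a..<b}"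
      proof (cases "a < i")
        case True then show ?thesis using i bmax by auto
      next
        case False then have "i < a" using i by auto
        moreover have "i \<noteq> a - 1" using i a1 by auto
        ultimately show ?thesis using i False by auto
      qed
    qed
  next
    show "{y\<in>J. Suc y < a} \<union> {a..<b} \<subseteq> (\<lambda>i. if a < i then i - 1 else i) ` (J - {a})"
    proof
      fix y assume y: "y \<in> {y\<in>J. Suc y < a} \<union> {a..<b}"
      show "y \<in> (\<lambda>i. if a < i then i - 1 else i) ` (J - {a})"
      proof (cases "y < a")
        case True
        then have "y \<in> J - {a}" "y = (if a < y then y - 1 else y)" using y by auto
        then show ?thesis by blast
      next
        case False
        then have "Suc y \<in> J - {a}" "y = (if a < Suc y then Suc y - 1 else Suc y)"
          using y ab by auto
        then show ?thesis by blast
      qed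
    qed
  qed
  finally show ?thesis .
qed

end

lemma hk_main:
  "finite J \<Longrightarrow> J \<subseteq> {1..<n} \<Longrightarrow> \<exists>p. (\<forall>s\<in>J. \<forall>x. e s (p x) = p x) \<and>
     (\<forall>w. set w = J \<longrightarrow> (\<exists>N0. \<forall>N\<ge>N0. ec (pw N w) = p))"
proof (induction J rule: finite_psubset_induct)
  case (psubset J)
  show ?case
  proof (cases "J = {}")
    case True
    then show ?thesis by (intro exI[of _ id]) (auto simp: pw_def)
  next
    case False
    define b where "b = Max J"
    have bJ: "b \<in> J" and bmax: "\<forall>x\<in>J. x \<le> b" using False psubset b_def by auto
    define a where "a = (LEAST a. {a..b} \<subseteq> J)"
    have ab: "{a..b} \<subseteq> J" unfolding a_def by (rule LeastI[of _ b]) (use bJ in auto)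
    have aleb: "a \<le> b" unfolding a_def by (rule Least_le) (use bJ in auto)
    have "a \<in> {a..b}" using aleb by simp
    then have "a \<in> J" using ab by (rule subsetD[rotated])
    then have "a \<in> {1..<n}" using psubset.prems by (rule subsetD[rotated])
    then have apos: "1 \<le> a" by simp
    have a1: "a - 1 \<notin> J"
    proof
      assume "a - 1 \<in> J"
      note am = this
      have "{a - 1..b} \<subseteq> J"
      proof
        fix x assume "x \<in> {a - 1..b}"
        then have "x = a - 1 \<or> x \<in> {a..b}" by auto
        then show "x \<in> J" using am ab by blast
      qed
      then have "a \<le> a - 1" unfolding a_def by (rule Least_le)
      then show False using apos by auto
    qed
    define J' where "J' = {y\<in>J. Suc y < a} \<union> {a..<b}"
    have "J' \<subseteq> J" using ab by (auto simp: J'_def)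
    moreover have "b \<notin> J'" using aleb by (auto simp: J'_def)
    ultimately have J'sub: "J' \<subset> J" using bJ by blast
    have J'r: "J' \<subseteq> {1..<n}" using J'sub psubset by auto
    obtain p' where p'abs: "\<forall>s\<in>J'. \<forall>x. e s (p' x) = p' x"
      and p'pow: "\<forall>w. set w = J' \<longrightarrow> (\<exists>N0. \<forall>N\<ge>N0. ec (pw N w) = p')"
      using psubset.IH[OF J'sub J'r] by blast
    define p where "p = p' \<circ> cc b a"
    have conv: "\<exists>N0. \<forall>N\<ge>N0. ec (pw N w) = p" if w: "set w = J" for w
    proof -
      have ph1: "\<exists>u j. set u \<subseteq> J' \<and> a \<le> j \<and> j \<le> Suc b \<and> (j = a \<or> j + N \<le> Suc b)
                 \<and> (\<forall>x. ec (pw N w) x = ec u (cc b j x))" for N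
      proof (induction N)
        case 0
        show ?case by (rule exI[of _ "[]"], rule exI[of _ "Suc b"]) (use aleb in \<open>auto simp: pw_def cc_top\<close>)
      next
        case (Suc N)
        then obtain u j where uj: "set u \<subseteq> J'" "a \<le> j" "j \<le> Suc b" "j = a \<or> j + N \<le> Suc b"
          "\<forall>x. ec (pw N w) x = ec u (cc b j x)" by blast
        have R: "(\<forall>x. cc b j (ec w x) = ec (fst (run j w)) (cc b (snd (run j w)) x))
          \<and> a \<le> snd (run j w) \<and> snd (run j w) \<le> j
          \<and> set (fst (run j w)) \<subseteq> J'
          \<and> (j - 1 \<in> set w \<and> a < j \<longrightarrow> snd (run j w) < j)"
          using run_ok[OF psubset.prems ab aleb bmax a1, of w j] w uj(2,3) unfolding J'_def by simp
        have "j - 1 \<in> set w" if "a < j"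
        proof -
          have "j - 1 \<in> {a..b}" using that uj by auto
          then show ?thesis using ab w by blast
        qed
        then have "snd (run j w) = a \<or> snd (run j w) + Suc N \<le> Suc b" using R uj by (cases "a < j") auto
        moreover have "\<forall>x. ec (pw (Suc N) w) x = ec (u @ fst (run j w)) (cc b (snd (run j w)) x)"
          using R uj(5) by (simp add: pw_Suc ec_append)
        moreover have "set (u @ fst (run j w)) \<subseteq> J'" using R uj(1) by simp
        moreover have "a \<le> snd (run j w)" "snd (run j w) \<le> Suc b" using R uj by auto
        ultimately show ?case by blast
      qed
      define K where "K = Suc b - a"
      obtain u where u: "set u \<subseteq> J'" "\<forall>x. ec (pw K w) x = ec u (cc b a x)"
      proof -
        obtain u j where uj: "set u \<subseteq> J'" "a \<le> j" "j \<le> Suc b" "j = a \<or> j + K \<le> Suc b"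
          "\<forall>x. ec (pw K w) x = ec u (cc b j x)" using ph1[of K] by blast
        have "j = a" using uj K_def by auto
        then show ?thesis using that uj by auto
      qed
      have shw: "set (sh a w) = J'" using set_sh[OF psubset.prems ab aleb bmax a1 w]
        unfolding J'_def by simp
      obtain M0 where M0: "\<forall>M\<ge>M0. ec (pw M (sh a w)) = p'" using p'pow shw by blast
      have "ec (pw N w) = p" if "N \<ge> K + M0" for N
      proof
        fix x
        define M where "M = N - K"
        have M: "N = K + M" "M \<ge> M0" using \<open>N \<ge> K + M0\<close> by (auto simp: M_def)
        have rs: "set (pw M w) \<subseteq> J" using w by (auto simp: pw_def)
        have ra: "run a (pw M w) = (sh a (pw M w), a)"
          using run_a[OF psubset.prems ab aleb bmax a1 rs] .
        have R: "\<forall>x. cc b a (ec (pw M w) x) = ec (fst (run a (pw M w))) (cc b (snd (run a (pw M w))) x)"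
          using run_ok[OF psubset.prems ab aleb bmax a1 rs, of a] aleb by simp
        have shp: "sh a (pw M w) = pw M (sh a w)" by (simp add: sh_def pw_map_filter)
        have "ec (pw N w) x = ec u (cc b a (ec (pw M w) x))"
          using M u by (simp add: pw_add ec_append)
        also have "\<dots> = ec u (ec (pw M (sh a w)) (cc b a x))" using R ra shp by simp
        also have "\<dots> = ec u (p' (cc b a x))" using M0 M by simp
        also have "\<dots> = p' (cc b a x)" using p'abs u(1) by (intro ec_absorb) auto
        finally show "ec (pw N w) x = p x" by (simp add: p_def)
      qed
      then show ?thesis by blast
    qed
    have absb: "\<forall>x. e s (p x) = p x" if s: "s \<in> J" for s
    proof
      fix x
      define w where "w = s # sorted_list_of_set J"
      have sw: "set w = J" using s psubset by (auto simp: w_def)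
      obtain N0 where N0: "\<forall>N\<ge>N0. ec (pw N w) = p" using conv[OF sw] by blast
      have "p x = ec (pw (Suc N0) w) x" using N0 by simp
      also have "\<dots> = e s (ec (sorted_list_of_set J @ pw N0 w) x)"
        by (simp add: pw_Suc' w_def)
      finally have px: "p x = e s (ec (sorted_list_of_set J @ pw N0 w) x)" .
      have "s \<in> {1..<n}" using s psubset by auto
      then show "e s (p x) = p x" using px idem by simp
    qed
    show ?thesis using absb conv by blast
  qed
qed

lemma hk_fix:
  assumes "set w \<subseteq> {1..<n}" "ec w x = x" "s \<in> set w"
  shows "e s x = x"
proof -
  obtain p where pa: "\<forall>s\<in>set w. \<forall>x. e s (p x) = p x"
    and pp: "\<exists>N0. \<forall>N\<ge>N0. ec (pw N w) = p" using hk_main[of "set w"] assms by auto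
  obtain N0 where N0: "ec (pw N0 w) = p" using pp by blast
  have "ec (pw N w) x = x" for N
    by (induct N) (auto simp: pw_def ec_append assms(2) simp del: ec_Cons)
  then have "p x = x" using N0 by metis
  then show ?thesis using pa assms(3) by metis
qed

end

lemma count_list_replicate: "count_list (replicate m x) y = (if x = y then m else 0)"
  by (induct m) auto

definition cr :: "(nat \<Rightarrow> nat) \<Rightarrow> nat \<Rightarrow> nat list" where
  "cr f k = concat (map (\<lambda>l. replicate (f l) l) [1..<Suc k])"

lemma count_cr: "count_list (cr f k) x = (if 1 \<le> x \<and> x \<le> k then f x else 0)"
  unfolding cr_def by (induct k) (auto simp: count_list_replicate)

lemma set_cr: "set (cr f k) \<subseteq> {1..k}"
  unfolding cr_def by (induct k) auto

lemma len_cr: "length (cr f k) = (\<Sum>l\<in>{1..k}. f l)"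
  unfolding cr_def by (induct k) auto

lemma sorted_cr: "sorted (cr f k)"
  unfolding cr_def
proof (induct k)
  case 0 then show ?case by simp
next
  case (Suc k)
  have "\<forall>x\<in>set (cr f k). x \<le> Suc k" using set_cr[of f k] by auto
  then have "\<forall>x\<in>set (concat (map (\<lambda>l. replicate (f l) l) [1..<Suc k])). x \<le> Suc k"
    by (simp add: cr_def)
  then show ?case using Suc by (auto simp: sorted_append)
qed

definition goodl :: "nat \<Rightarrow> nat list \<Rightarrow> (nat \<Rightarrow> nat) \<Rightarrow> bool" where
  "goodl n i e \<longleftrightarrow> length i = n \<and> (\<forall>j<n. 1 \<le> i ! j) \<and> sorted i \<and> (\<forall>k. count_list i k = e k)"

definition validl :: "nat \<Rightarrow> (nat \<Rightarrow> nat) \<Rightarrow> bool" where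
  "validl n e \<longleftrightarrow> (\<exists>i. goodl n i e)"

definition lst :: "nat \<Rightarrow> (nat \<Rightarrow> nat) \<Rightarrow> nat list" where
  "lst n e = (THE i. goodl n i e)"

definition Sd :: "nat \<Rightarrow> (nat \<Rightarrow> nat) \<Rightarrow> nat set" where
  "Sd n e = {p \<in> {1..<n}. lst n e ! (p - 1) < lst n e ! p}"

definition sig :: "(nat \<Rightarrow> nat) \<Rightarrow> nat \<Rightarrow> nat" where
  "sig e j = (\<Sum>l\<in>{1..j}. e l)"

lemma sig_0[simp]: "sig e 0 = 0" by (simp add: sig_def)
lemma sig_Suc: "sig e (Suc j) = sig e j + e (Suc j)" by (simp add: sig_def)
lemma sig_mono: "j \<le> l \<Longrightarrow> sig e j \<le> sig e l"
  unfolding sig_def by (rule sum_mono2) auto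

lemma goodl_unique: "goodl n i e \<Longrightarrow> goodl n i' e \<Longrightarrow> i = i'"
proof -
  assume g: "goodl n i e" "goodl n i' e"
  have "mset i = mset i'" using g by (auto simp: goodl_def multiset_eq_iff count_mset)
  then have "sort i' = i" using g by (intro properties_for_sort) (auto simp: goodl_def)
  then show ?thesis using g by (simp add: goodl_def sorted_sort_id)
qed

lemma lst_eq: "goodl n i e \<Longrightarrow> lst n e = i"
  unfolding lst_def using goodl_unique by blast

lemma Lfun_eval:
  assumes S: "S \<subseteq> {1..<n}"
  shows "Lfun S n e = (if validl n e \<and> S \<subseteq> Sd n e then 1 else 0)"
proof (cases "validl n e")
  case False
  then have "{i :: nat list. length i = n \<and> (\<forall>j<n. 1 \<le> i ! j) \<and> sorted i
       \<and> (\<forall>j\<in>S. 1 \<le> j \<and> j < n \<longrightarrow> i ! (j - 1) < i ! j)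
       \<and> (\<forall>k. count_list i k = e k)} = {}" (is "?A = {}") by (auto simp: validl_def goodl_def)
  have "Lfun S n e = int (card ?A)" unfolding Lfun_def ..
  then show ?thesis using False by (simp only: \<open>?A = {}\<close> card.empty) simp
next
  case True
  then obtain i where gi: "goodl n i e" by (auto simp: validl_def)
  have l: "lst n e = i" using lst_eq[OF gi] .
  have st: "(\<forall>j\<in>S. 1 \<le> j \<and> j < n \<longrightarrow> i ! (j - 1) < i ! j) \<longleftrightarrow> S \<subseteq> Sd n e"
    using S l by (auto simp: Sd_def)
  define Q where "Q x \<longleftrightarrow> (\<forall>j\<in>S. 1 \<le> j \<and> j < n \<longrightarrow> x ! (j - 1) < x ! j)" for x :: "nat list"
  have A: "{i :: nat list. length i = n \<and> (\<forall>j<n. 1 \<le> i ! j) \<and> sorted i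
       \<and> (\<forall>j\<in>S. 1 \<le> j \<and> j < n \<longrightarrow> i ! (j - 1) < i ! j)
       \<and> (\<forall>k. count_list i k = e k)} = {x. goodl n x e \<and> Q x}"
    unfolding goodl_def Q_def by blast
  have B: "{x. goodl n x e \<and> Q x} = (if S \<subseteq> Sd n e then {i} else {})"
  proof (cases "S \<subseteq> Sd n e")
    case True
    then have "Q i" using st Q_def by simp
    have "x \<in> {x. goodl n x e \<and> Q x} \<longleftrightarrow> x \<in> {i}" for x
    proof
      assume "x \<in> {x. goodl n x e \<and> Q x}"
      then have "goodl n x e" by simp
      then show "x \<in> {i}" using goodl_unique[OF gi] by simp
    next
      assume "x \<in> {i}"
      then show "x \<in> {x. goodl n x e \<and> Q x}" using gi \<open>Q i\<close> by simp
    qed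
    then have "{x. goodl n x e \<and> Q x} = {i}" by (rule set_eqI)
    then show ?thesis using True by simp
  next
    case False
    then have "\<not> Q i" using st Q_def by simp
    have "x \<notin> {x. goodl n x e \<and> Q x}" for x
    proof
      assume "x \<in> {x. goodl n x e \<and> Q x}"
      then have "goodl n x e" "Q x" by simp_all
      then show False using goodl_unique[OF gi] \<open>\<not> Q i\<close> by simp
    qed
    then have "{x. goodl n x e \<and> Q x} = {}" by blast
    then show ?thesis using False by simp
  qed
  have "Lfun S n e = int (card {x. goodl n x e \<and> Q x})" unfolding Lfun_def A ..
  then show ?thesis using True B by simp
qed

lemma sum_count_filter: "finite A \<Longrightarrow> (\<Sum>l\<in>A. count_list xs l) = length (filter (\<lambda>x. x \<in> A) xs)"
proof (induct xs)
  case Nil then show ?case by simp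
next
  case (Cons a xs)
  have "(\<Sum>l\<in>A. count_list (a # xs) l) = (\<Sum>l\<in>A. count_list xs l + (if a = l then 1 else 0))"
    by (rule sum.cong) auto
  also have "\<dots> = (\<Sum>l\<in>A. count_list xs l) + (if a \<in> A then 1 else 0)"
    using Cons.prems by (simp add: sum.distrib)
  finally show ?case using Cons by simp
qed

lemma sig_card:
  assumes g: "goodl n i e"
  shows "sig e j = card {q. q < n \<and> i ! q \<le> j}"
proof -
  have "sig e j = (\<Sum>l\<in>{1..j}. count_list i l)" using g by (simp add: sig_def goodl_def)
  also have "\<dots> = length (filter (\<lambda>x. x \<in> {1..j}) i)" by (rule sum_count_filter) simp
  also have "\<dots> = card {q. q < length i \<and> i ! q \<in> {1..j}}" by (rule length_filter_conv_card)
  also have "{q. q < length i \<and> i ! q \<in> {1..j}} = {q. q < n \<and> i ! q \<le> j}"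
    using g by (auto simp: goodl_def)
  finally show ?thesis .
qed

lemma sorted_D_eq:
  assumes s: "sorted i" "length i = n" and p: "0 < p" "p < n" and lt: "i ! (p - 1) < i ! p"
  shows "card {q. q < n \<and> i ! q \<le> i ! (p - 1)} = p"
proof -
  have "{q. q < n \<and> i ! q \<le> i ! (p - 1)} = {..<p}"
  proof (intro set_eqI iffI)
    fix q assume q: "q \<in> {q. q < n \<and> i ! q \<le> i ! (p - 1)}"
    show "q \<in> {..<p}"
    proof (rule ccontr)
      assume "q \<notin> {..<p}"
      then have "i ! p \<le> i ! q" using s q by (intro sorted_nth_mono) auto
      then show False using q lt by auto
    qed
  next
    fix q assume "q \<in> {..<p}"
    then show "q \<in> {q. q < n \<and> i ! q \<le> i ! (p - 1)}" using s p by (auto intro: sorted_nth_mono)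
  qed
  then show ?thesis by simp
qed

lemma sorted_D_char:
  assumes s: "sorted i" "length i = n" and p: "0 < p" "p < n"
    and c: "card {q. q < n \<and> i ! q \<le> j} = p"
  shows "i ! (p - 1) \<le> j \<and> j < i ! p"
proof
  show "i ! (p - 1) \<le> j"
  proof (rule ccontr)
    assume h: "\<not> i ! (p - 1) \<le> j"
    have "{q. q < n \<and> i ! q \<le> j} \<subseteq> {..<p - 1}"
    proof
      fix q assume q: "q \<in> {q. q < n \<and> i ! q \<le> j}"
      show "q \<in> {..<p - 1}"
      proof (rule ccontr)
        assume "q \<notin> {..<p - 1}"
        then have "i ! (p - 1) \<le> i ! q" using s q by (intro sorted_nth_mono) auto
        then show False using q h by auto
      qed
    qed
    then have "card {q. q < n \<and> i ! q \<le> j} \<le> p - 1" using card_mono[of "{..<p - 1}"] by fastforce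
    then show False using c p by auto
  qed
next
  show "j < i ! p"
  proof (rule ccontr)
    assume h: "\<not> j < i ! p"
    have "{..p} \<subseteq> {q. q < n \<and> i ! q \<le> j}"
    proof
      fix q assume "q \<in> {..p}"
      then have "i ! q \<le> i ! p" "q < n" using s p by (auto intro: sorted_nth_mono)
      then show "q \<in> {q. q < n \<and> i ! q \<le> j}" using h by auto
    qed
    then have "card {..p} \<le> card {q. q < n \<and> i ! q \<le> j}" by (intro card_mono) auto
    then show False using c by simp
  qed
qed

lemma Sd_sig:
  assumes g: "goodl n i e" and le: "\<forall>x\<in>set i. x \<le> k"
  shows "Sd n e = {p. \<exists>j\<le>k. p = sig e j \<and> 0 < p \<and> p < n}"
proof (intro set_eqI iffI)
  have l: "lst n e = i" using lst_eq[OF g] .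
  have si: "sorted i" "length i = n" using g by (auto simp: goodl_def)
  {
    fix p assume "p \<in> Sd n e"
    then have p: "0 < p" "p < n" "i ! (p - 1) < i ! p" using l by (auto simp: Sd_def)
    define j where "j = i ! (p - 1)"
    have "j \<in> set i" using p si unfolding j_def by auto
    then have "j \<le> k" using le by auto
    moreover have "sig e j = p" using sig_card[OF g] sorted_D_eq[OF si p] by (simp add: j_def)
    ultimately show "p \<in> {p. \<exists>j\<le>k. p = sig e j \<and> 0 < p \<and> p < n}" using p by auto
  }
  {
    fix p assume "p \<in> {p. \<exists>j\<le>k. p = sig e j \<and> 0 < p \<and> p < n}"
    then obtain j where j: "p = sig e j" "0 < p" "p < n" by auto
    then have "card {q. q < n \<and> i ! q \<le> j} = p" using sig_card[OF g] by simp
    then have "i ! (p - 1) \<le> j \<and> j < i ! p" using sorted_D_char[OF si j(2,3)] by blast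
    then show "p \<in> Sd n e" using j l by (auto simp: Sd_def)
  }
qed

locale gbp =
  fixes P :: "'a::order set" and n :: nat and bt tp :: 'a
  assumes gb: "graded_bounded P n bt tp"
begin

lemma finP: "finite P" using gb by (simp add: graded_bounded_def)
lemma btP: "bt \<in> P" using gb by (simp add: graded_bounded_def)
lemma tpP: "tp \<in> P" using gb by (simp add: graded_bounded_def)
lemma bnds: "x \<in> P \<Longrightarrow> bt \<le> x \<and> x \<le> tp" using gb by (simp add: graded_bounded_def)
lemma mccard: "M \<in> MC P \<Longrightarrow> card M = n + 1" using gb by (simp add: graded_bounded_def)

lemma chain_fin: "is_chain P C \<Longrightarrow> finite C"
  using finP by (auto simp: is_chain_def intro: finite_subset)

lemma finMC: "finite (MC P)"
proof -
  have "MC P \<subseteq> Pow P" by (auto simp: MC_def maximal_chain_def is_chain_def)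
  then show ?thesis using finP by (meson finite_Pow_iff finite_subset)
qed

lemma ext_max:
  assumes C: "is_chain P C"
  shows "\<exists>M. M \<in> MC P \<and> C \<subseteq> M"
proof -
  define Ch where "Ch = {D. is_chain P D \<and> C \<subseteq> D}"
  have "Ch \<subseteq> Pow P" by (auto simp: Ch_def is_chain_def)
  then have fin: "finite Ch" using finP by (meson finite_Pow_iff finite_subset)
  have ne: "C \<in> Ch" using C by (simp add: Ch_def)
  define k where "k = Max (card ` Ch)"
  have "k \<in> card ` Ch" unfolding k_def using fin ne by (intro Max_in) auto
  then obtain D where D: "D \<in> Ch" "card D = k" by auto
  have kmax: "card D' \<le> k" if "D' \<in> Ch" for D' unfolding k_def using fin that by (intro Max_ge) auto
  have "maximal_chain P D"
    unfolding maximal_chain_def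
  proof (intro conjI allI impI)
    show "is_chain P D" using D by (simp add: Ch_def)
    fix D' assume h: "is_chain P D' \<and> D \<subseteq> D'"
    then have "D' \<in> Ch" using D by (auto simp: Ch_def)
    then have "card D' \<le> card D" using kmax D by simp
    moreover have "finite D'" using h chain_fin by blast
    ultimately show "D' = D" using h card_seteq by blast
  qed
  then show ?thesis using D by (auto simp: MC_def Ch_def)
qed

definition RS :: "'a \<Rightarrow> nat set" where
  "RS x = {card C |C. is_chain P C \<and> (\<forall>y\<in>C. y \<le> x)}"

lemma rk_RS: "rk P x = Max (RS x) - 1" by (simp add: rk_def RS_def)

lemma RS_fin: "finite (RS x)"
proof -
  have "RS x \<subseteq> card ` Pow P" by (auto simp: RS_def is_chain_def)
  then show ?thesis using finP by (meson finite_Pow_iff finite_imageI finite_subset)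
qed

lemma RS_1: "x \<in> P \<Longrightarrow> 1 \<in> RS x"
proof -
  assume "x \<in> P"
  then have "is_chain P {x} \<and> (\<forall>y\<in>{x}. y \<le> x)" by (simp add: is_chain_def)
  then show ?thesis unfolding RS_def by force
qed

lemma rk_mono: assumes "x \<in> P" "y \<in> P" "x < y" shows "rk P x < rk P y"
proof -
  have ne: "RS x \<noteq> {}" using RS_1 assms by blast
  have "Max (RS x) \<in> RS x" using RS_fin ne by (rule Max_in)
  then obtain C where C0: "Max (RS x) = card C" "is_chain P C" "\<forall>z\<in>C. z \<le> x"
    unfolding RS_def by blast
  then have C: "is_chain P C" "\<forall>z\<in>C. z \<le> x" "card C = Max (RS x)" by auto
  have yC: "y \<notin> C" using C assms by force
  have ch: "is_chain P (insert y C)"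
    using C assms unfolding is_chain_def by (auto intro: order.trans order.strict_implies_order)
  have "\<forall>z\<in>insert y C. z \<le> y" using C assms by (auto intro: order.trans order.strict_implies_order)
  then have "card (insert y C) \<in> RS y" using ch unfolding RS_def by blast
  then have "card (insert y C) \<le> Max (RS y)" using RS_fin by (rule Max_ge[rotated])
  moreover have "card (insert y C) = Suc (card C)" using yC chain_fin[OF C(1)] by simp
  moreover have "1 \<le> Max (RS x)" using RS_1[OF assms(1)] RS_fin by (simp add: Max_ge)
  ultimately show ?thesis using C by (simp add: rk_RS)
qed

lemma rk_bt: "rk P bt = 0"
proof -
  have "\<forall>k\<in>RS bt. k \<le> 1"
  proof
    fix k assume "k \<in> RS bt"
    then obtain C where C: "is_chain P C" "\<forall>y\<in>C. y \<le> bt" "k = card C" unfolding RS_def by blast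
    have "C \<subseteq> {bt}"
    proof
      fix y assume "y \<in> C"
      then have "y \<in> P" "y \<le> bt" using C by (auto simp: is_chain_def)
      then show "y \<in> {bt}" using bnds[of y] by (simp add: order.antisym)
    qed
    then have "card C \<le> card {bt}" by (intro card_mono) auto
    then show "k \<le> 1" using C by simp
  qed
  then have "Max (RS bt) \<le> 1" using RS_fin RS_1[OF btP] by (subst Max_le_iff) auto
  moreover have "1 \<le> Max (RS bt)" using RS_1[OF btP] RS_fin by (simp add: Max_ge)
  ultimately show ?thesis by (simp add: rk_RS)
qed

lemma rk_tp: "rk P tp = n"
proof -
  have "\<forall>k\<in>RS tp. k \<le> n + 1"
  proof
    fix k assume "k \<in> RS tp"
    then obtain C where C: "is_chain P C" "k = card C" unfolding RS_def by blast
    obtain M where M: "M \<in> MC P" "C \<subseteq> M" using ext_max[OF C(1)] by blast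
    have "finite M" using M chain_fin by (auto simp: MC_def maximal_chain_def)
    then have "card C \<le> card M" using M by (intro card_mono) auto
    then show "k \<le> n + 1" using C M mccard by simp
  qed
  then have "Max (RS tp) \<le> n + 1" using RS_fin RS_1[OF tpP] by (subst Max_le_iff) auto
  moreover have "n + 1 \<in> RS tp"
  proof -
    have "is_chain P {}" by (simp add: is_chain_def)
    then obtain M where M: "M \<in> MC P" using ext_max by blast
    then have "is_chain P M" by (simp add: MC_def maximal_chain_def)
    moreover have "\<forall>y\<in>M. y \<le> tp" using calculation bnds by (auto simp: is_chain_def)
    ultimately show ?thesis using mccard[OF M] unfolding RS_def by force
  qed
  then have "n + 1 \<le> Max (RS tp)" using RS_fin by (rule Max_ge[rotated])
  ultimately show ?thesis by (simp add: rk_RS)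
qed

lemma rk_le_cmp: "x \<in> P \<Longrightarrow> y \<in> P \<Longrightarrow> x \<le> y \<or> y \<le> x \<Longrightarrow> rk P x \<le> rk P y \<Longrightarrow> x \<le> y"
  using rk_mono[of y x] by (auto simp: order.order_iff_strict)

lemma rk_inj_cmp: "x \<in> P \<Longrightarrow> y \<in> P \<Longrightarrow> x \<le> y \<or> y \<le> x \<Longrightarrow> rk P x = rk P y \<Longrightarrow> x = y"
  using rk_le_cmp[of x y] rk_le_cmp[of y x] by (auto intro: order.antisym)

lemma rk_pos: "x \<in> P \<Longrightarrow> x \<noteq> bt \<Longrightarrow> 0 < rk P x"
  using rk_mono[of bt x] btP bnds[of x] rk_bt by (auto simp: order.order_iff_strict)

lemma rk_ltn: "x \<in> P \<Longrightarrow> x \<noteq> tp \<Longrightarrow> rk P x < n"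
  using rk_mono[of x tp] tpP bnds[of x] rk_tp by (auto simp: order.order_iff_strict)

lemma rk_len: "x \<in> P \<Longrightarrow> rk P x \<le> n"
  using rk_ltn[of x] rk_tp by (cases "x = tp") auto

end

context gbp
begin

definition mch :: "(nat \<Rightarrow> nat) \<Rightarrow> 'a list \<Rightarrow> nat \<Rightarrow> bool" where
  "mch e ts k \<longleftrightarrow> length ts = k + 1 \<and> set ts \<subseteq> P
       \<and> ts ! 0 = bt \<and> ts ! k = tp
       \<and> (\<forall>j. j + 1 < k \<longrightarrow> ts ! j \<le> ts ! (j + 1)) \<and> ts ! (k - 1) < ts ! k
       \<and> e 0 = 0 \<and> (\<forall>j\<in>{1..k}. e j = rk P (ts ! j) - rk P (ts ! (j - 1)))
       \<and> (\<forall>j>k. e j = 0)"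

lemma FP_alt: "FP P bt tp e = int (card {ts. \<exists>k\<ge>1. mch e ts k})"
  unfolding FP_def mch_def ..

lemma mch_D:
  assumes "mch e ts k"
  shows "length ts = k + 1" "set ts \<subseteq> P" "ts ! 0 = bt" "ts ! k = tp"
    "\<forall>j. j + 1 < k \<longrightarrow> ts ! j \<le> ts ! (j + 1)" "ts ! (k - 1) < ts ! k"
    "e 0 = 0" "\<forall>j\<in>{1..k}. e j = rk P (ts ! j) - rk P (ts ! (j - 1))" "\<forall>j>k. e j = 0"
  using assms unfolding mch_def by blast+

lemma mch_P: "mch e ts k \<Longrightarrow> j \<le> k \<Longrightarrow> ts ! j \<in> P"
  unfolding mch_def by (metis le_imp_less_Suc nth_mem subsetD Suc_eq_plus1)

lemma mch_step: "mch e ts k \<Longrightarrow> 1 \<le> l \<Longrightarrow> l \<le> k \<Longrightarrow> ts ! (l - 1) \<le> ts ! l"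
proof -
  assume m: "mch e ts k" and l: "1 \<le> l" "l \<le> k"
  show ?thesis
  proof (cases "l = k")
    case True then show ?thesis using mch_D(6)[OF m] by (simp add: order.strict_implies_order)
  next
    case False
    then have "(l - 1) + 1 < k" using l by auto
    then have "ts ! (l - 1) \<le> ts ! ((l - 1) + 1)" using mch_D(5)[OF m] by blast
    then show ?thesis using l by simp
  qed
qed

lemma mch_mono: "mch e ts k \<Longrightarrow> j \<le> l \<Longrightarrow> l \<le> k \<Longrightarrow> ts ! j \<le> ts ! l"
proof (induction l)
  case 0 then show ?case by simp
next
  case (Suc l)
  show ?case
  proof (cases "j = Suc l")
    case True then show ?thesis by simp
  next
    case False
    then have "ts ! j \<le> ts ! l" using Suc by auto
    moreover have "ts ! l \<le> ts ! Suc l" using mch_step[OF Suc.prems(1), of "Suc l"] Suc.prems by simp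
    ultimately show ?thesis by (rule order.trans)
  qed
qed

lemma mch_cmp: "mch e ts k \<Longrightarrow> x \<in> set ts \<Longrightarrow> y \<in> set ts \<Longrightarrow> x \<le> y \<or> y \<le> x"
proof -
  assume m: "mch e ts k" and xy: "x \<in> set ts" "y \<in> set ts"
  have len: "length ts = k + 1" using m by (simp add: mch_def)
  obtain a b where ab: "a < k + 1" "b < k + 1" "x = ts ! a" "y = ts ! b"
    using xy len by (metis in_set_conv_nth)
  show ?thesis
  proof (cases "a \<le> b")
    case True then show ?thesis using mch_mono[OF m, of a b] ab by simp
  next
    case False then show ?thesis using mch_mono[OF m, of b a] ab by simp
  qed
qed

lemma mch_rk: "mch e ts k \<Longrightarrow> j \<le> k \<Longrightarrow> rk P (ts ! j) = sig e j"
proof (induction j)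
  case 0 then show ?case using rk_bt by (simp add: mch_def)
next
  case (Suc j)
  have m: "mch e ts k" and jk: "Suc j \<le> k" using Suc.prems by auto
  have le: "ts ! j \<le> ts ! Suc j" using mch_step[OF m, of "Suc j"] jk by simp
  have "rk P (ts ! j) \<le> rk P (ts ! Suc j)"
  proof (cases "ts ! j = ts ! Suc j")
    case True then show ?thesis by simp
  next
    case False
    then have "ts ! j < ts ! Suc j" using le by (simp add: order.order_iff_strict)
    then show ?thesis using rk_mono mch_P[OF m] jk by (meson Suc_leD less_imp_le_nat)
  qed
  moreover have "e (Suc j) = rk P (ts ! Suc j) - rk P (ts ! j)" using m jk by (auto simp: mch_def)
  ultimately show ?case using Suc jk by (simp add: sig_Suc)
qed

lemma mch_sig: "mch e ts k \<Longrightarrow> sig e k = n"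
  using mch_rk[of e ts k k] rk_tp mch_D(4) by simp

lemma mch_ek: "mch e ts k \<Longrightarrow> 1 \<le> k \<Longrightarrow> 0 < e k"
proof -
  assume m: "mch e ts k" and k: "1 \<le> k"
  have "ts ! (k - 1) < tp" using mch_D(4,6)[OF m] by simp
  then have "rk P (ts ! (k - 1)) < rk P tp" using rk_mono mch_P[OF m, of "k - 1"] tpP by simp
  moreover have "e k = rk P (ts ! k) - rk P (ts ! (k - 1))" using m k by (auto simp: mch_def)
  ultimately show ?thesis using m by (simp add: mch_def)
qed

lemma mch_k_eq: "mch e ts k \<Longrightarrow> 1 \<le> k \<Longrightarrow> mch e ts' k' \<Longrightarrow> 1 \<le> k' \<Longrightarrow> k = k'"
proof -
  assume m: "mch e ts k" "1 \<le> k" "mch e ts' k'" "1 \<le> k'"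
  have "\<not> k < k'" using mch_ek[OF m(3,4)] m(1) by (auto simp: mch_def)
  moreover have "\<not> k' < k" using mch_ek[OF m(1,2)] m(3) by (auto simp: mch_def)
  ultimately show ?thesis by simp
qed

lemma mch_valid: "mch e ts k \<Longrightarrow> goodl n (cr e k) e"
proof -
  assume m: "mch e ts k"
  have len: "length (cr e k) = n" using len_cr[of e k] mch_sig[OF m] by (simp add: sig_def)
  have ge: "\<forall>j<n. 1 \<le> cr e k ! j"
  proof (intro allI impI)
    fix j assume "j < n"
    then have "j < length (cr e k)" by (simp only: len)
    then have "cr e k ! j \<in> set (cr e k)" by (rule nth_mem)
    then have "cr e k ! j \<in> {1..k}" by (rule subsetD[OF set_cr])
    then show "1 \<le> cr e k ! j" by (metis atLeastAtMost_iff)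
  qed
  have cnt: "\<forall>x. count_list (cr e k) x = e x"
  proof
    fix x
    show "count_list (cr e k) x = e x"
      using count_cr[of e k x] m by (cases "x = 0"; cases "x \<le> k") (auto simp: mch_def)
  qed
  show ?thesis using len ge cnt sorted_cr by (simp add: goodl_def)
qed

definition gs :: "'a list \<Rightarrow> 'a set" where
  "gs ts = {x \<in> set ts. bt < x \<and> x < tp}"

definition CS :: "nat set \<Rightarrow> 'a set set" where
  "CS S = {T. is_chain P T \<and> (\<forall>t\<in>T. bt < t \<and> t < tp) \<and> card T = card S \<and> rk P ` T = S}"

lemma flag_CS: "flag_f P bt tp S = card (CS S)"
  unfolding flag_f_def CS_def ..

lemma mch_le_k: "mch e ts k \<Longrightarrow> goodl n i e \<Longrightarrow> \<forall>x\<in>set i. x \<le> k"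
proof
  fix x assume m: "mch e ts k" and g: "goodl n i e" and x: "x \<in> set i"
  have "count_list i x \<noteq> 0" using x by (simp add: count_list_0_iff)
  then have "e x \<noteq> 0" using g by (simp add: goodl_def)
  then show "x \<le> k" using mch_D(9)[OF m] by (meson not_le)
qed

lemma mch_in: "mch e ts k \<Longrightarrow> x \<in> set ts \<Longrightarrow> \<exists>j\<le>k. x = ts ! j"
proof -
  assume m: "mch e ts k" and x: "x \<in> set ts"
  obtain j where "j < length ts" "ts ! j = x" using x by (metis in_set_conv_nth)
  then show ?thesis using mch_D(1)[OF m] by (intro exI[of _ j]) auto
qed

lemma strict_of_rk: "x \<in> P \<Longrightarrow> 0 < rk P x \<Longrightarrow> rk P x < n \<Longrightarrow> bt < x \<and> x < tp"
proof -
  assume x: "x \<in> P" "0 < rk P x" "rk P x < n"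
  have "x \<noteq> bt" using x rk_bt by auto
  moreover have "x \<noteq> tp" using x rk_tp by auto
  ultimately show ?thesis using bnds[OF x(1)] by (simp add: order.order_iff_strict)
qed

lemma rk_gs: "mch e ts k \<Longrightarrow> rk P ` gs ts = {p. \<exists>j\<le>k. p = sig e j \<and> 0 < p \<and> p < n}"
proof (intro set_eqI iffI)
  fix p assume m: "mch e ts k"
  {
    assume "p \<in> rk P ` gs ts"
    then obtain x where x: "x \<in> set ts" "bt < x" "x < tp" "p = rk P x" by (auto simp: gs_def)
    obtain j where j: "j \<le> k" "x = ts ! j" using mch_in[OF m x(1)] by blast
    have xP: "x \<in> P" using mch_P[OF m j(1)] j by simp
    have "0 < rk P x" using rk_pos[OF xP] x by auto
    moreover have "rk P x < n" using rk_ltn[OF xP] x by auto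
    ultimately show "p \<in> {p. \<exists>j\<le>k. p = sig e j \<and> 0 < p \<and> p < n}"
      using mch_rk[OF m j(1)] j x by auto
  }
  {
    assume "p \<in> {p. \<exists>j\<le>k. p = sig e j \<and> 0 < p \<and> p < n}"
    then obtain j where j: "j \<le> k" "p = sig e j" "0 < p" "p < n" by auto
    define x where "x = ts ! j"
    have xP: "x \<in> P" using mch_P[OF m j(1)] by (simp add: x_def)
    have rx: "rk P x = p" using mch_rk[OF m j(1)] j by (simp add: x_def)
    have "bt < x \<and> x < tp" using strict_of_rk[OF xP] rx j by simp
    moreover have "x \<in> set ts" using mch_D(1)[OF m] j(1) unfolding x_def by (intro nth_mem) simp
    ultimately have "x \<in> gs ts" by (simp add: gs_def)
    then show "p \<in> rk P ` gs ts" using rx by (auto intro: image_eqI[of p _ x])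
  }
qed

lemma chain_inj: "is_chain P C \<Longrightarrow> inj_on (rk P) C"
  unfolding inj_on_def is_chain_def by (meson rk_inj_cmp subsetD)

lemma gs_CS:
  assumes m: "mch e ts k" and g: "goodl n i e"
  shows "gs ts \<in> CS (Sd n e)"
proof -
  have ch: "is_chain P (gs ts)"
    unfolding is_chain_def gs_def using mch_D(2)[OF m] mch_cmp[OF m] by auto
  have r: "rk P ` gs ts = Sd n e"
    using rk_gs[OF m] Sd_sig[OF g mch_le_k[OF m g]] by simp
  have "card (gs ts) = card (Sd n e)"
    using card_image[OF chain_inj[OF ch]] r by simp
  then show ?thesis using ch r unfolding CS_def gs_def by auto
qed

lemma inj_gs: "inj_on gs {ts. \<exists>k\<ge>1. mch e ts k}"
proof (rule inj_onI)
  fix ts ts' assume "ts \<in> {ts. \<exists>k\<ge>1. mch e ts k}" "ts' \<in> {ts. \<exists>k\<ge>1. mch e ts k}"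
    and eq: "gs ts = gs ts'"
  then obtain k k' where m: "mch e ts k" "1 \<le> k" "mch e ts' k'" "1 \<le> k'" by auto
  have kk: "k' = k" using mch_k_eq[OF m] by simp
  have loc: "y = bt \<or> y = tp \<or> y \<in> gs t" if "y \<in> set t" "set t \<subseteq> P" for y t
  proof -
    have yP: "y \<in> P" using that by auto
    show ?thesis
    proof (cases "y = bt \<or> y = tp")
      case True then show ?thesis by auto
    next
      case False
      then have "bt < y \<and> y < tp" using bnds[OF yP] by (auto simp: order.order_iff_strict)
      then show ?thesis using that by (simp add: gs_def)
    qed
  qed
  show "ts = ts'"
  proof (rule nth_equalityI)
    show "length ts = length ts'" using mch_D(1)[OF m(1)] mch_D(1)[OF m(3)] kk by simp
    fix j assume "j < length ts"
    then have j: "j \<le> k" using mch_D(1)[OF m(1)] by simp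
    define x y where "x = ts ! j" and "y = ts' ! j"
    have xP: "x \<in> P" "y \<in> P" using mch_P[OF m(1) j] mch_P[OF m(3)] j kk by (auto simp: x_def y_def)
    have rr: "rk P x = rk P y" using mch_rk[OF m(1) j] mch_rk[OF m(3)] j kk by (simp add: x_def y_def)
    have xs: "x \<in> set ts" using mch_D(1)[OF m(1)] j unfolding x_def by (intro nth_mem) simp
    have ys: "y \<in> set ts'" using mch_D(1)[OF m(3)] j kk unfolding y_def by (intro nth_mem) simp
    have c1: "x = bt \<or> x = tp \<or> x \<in> gs ts" using loc[OF xs mch_D(2)[OF m(1)]] .
    have c2: "y = bt \<or> y = tp \<or> y \<in> gs ts" using loc[OF ys mch_D(2)[OF m(3)]] eq by simp
    have cmp: "x \<le> y \<or> y \<le> x"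
    proof (cases "x \<in> gs ts \<and> y \<in> gs ts")
      case True
      then show ?thesis using mch_cmp[OF m(1)] by (auto simp: gs_def)
    next
      case False
      then show ?thesis using c1 c2 bnds[OF xP(1)] bnds[OF xP(2)] by auto
    qed
    show "ts ! j = ts' ! j" using rk_inj_cmp[OF xP cmp rr] by (simp add: x_def y_def)
  qed
qed

lemma surj_gs:
  assumes n1: "1 \<le> n" and g: "goodl n i e" and T: "T \<in> CS (Sd n e)"
  shows "\<exists>ts k. 1 \<le> k \<and> mch e ts k \<and> gs ts = T"
proof -
  have gi: "length i = n" "\<forall>j<n. 1 \<le> i ! j" "sorted i" "\<forall>k. count_list i k = e k"
    using g by (auto simp: goodl_def)
  have Tc: "is_chain P T" "\<forall>t\<in>T. bt < t \<and> t < tp" "rk P ` T = Sd n e"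
    using T by (auto simp: CS_def)
  have TP: "T \<subseteq> P" using Tc(1) by (simp add: is_chain_def)
  have ine: "i \<noteq> []" using gi n1 by auto
  have ne: "set i \<noteq> {}" using ine by simp
  define K where "K = Max (set i)"
  have Kin: "K \<in> set i" using ne unfolding K_def by (intro Max_in) auto
  have Kge: "\<forall>x\<in>set i. x \<le> K" unfolding K_def by simp
  obtain q0 where q0: "q0 < n" "i ! q0 = K" using Kin gi(1) by (metis in_set_conv_nth)
  have K1: "1 \<le> K" using gi(2) q0 by auto
  have seti: "x \<in> set i \<Longrightarrow> 1 \<le> x" for x using gi by (metis in_set_conv_nth)
  have e0: "e 0 = 0"
  proof -
    have "0 \<notin> set i"
    proof
      assume "0 \<in> set i"
      then have "1 \<le> (0::nat)" by (rule seti)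
      then show False by simp
    qed
    then show ?thesis using gi(4) by (metis count_list_0_iff)
  qed
  have eK: "\<forall>j>K. e j = 0"
  proof (intro allI impI)
    fix j assume "K < j"
    have "j \<notin> set i"
    proof
      assume "j \<in> set i"
      then have "j \<le> K" using Kge by blast
      then show False using \<open>K < j\<close> by simp
    qed
    then show "e j = 0" using gi(4) by (metis count_list_0_iff)
  qed
  have sigc: "sig e j = card {q. q < n \<and> i ! q \<le> j}" for j using sig_card[OF g] .
  have sigle: "sig e j \<le> n" for j
  proof -
    have "{q. q < n \<and> i ! q \<le> j} \<subseteq> {..<n}" by auto
    then have "card {q. q < n \<and> i ! q \<le> j} \<le> card {..<n}" by (intro card_mono) auto
    then show ?thesis using sigc by simp
  qed
  have sigK: "sig e K = n"
  proof -
    have "{q. q < n \<and> i ! q \<le> K} = {..<n}"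
    proof (intro set_eqI iffI)
      fix q assume "q \<in> {..<n}"
      then have "q < length i" using gi(1) by simp
      then have "i ! q \<in> set i" by (rule nth_mem)
      then have "i ! q \<le> K" using Kge by blast
      then show "q \<in> {q. q < n \<and> i ! q \<le> K}" using \<open>q \<in> {..<n}\<close> by simp
    qed simp
    then show ?thesis using sigc by simp
  qed
  have sigK1: "sig e (K - 1) < n"
  proof -
    have s1: "{q. q < n \<and> i ! q \<le> K - 1} \<subseteq> {..<n}" by auto
    have s2: "q0 \<in> {..<n}" "q0 \<notin> {q. q < n \<and> i ! q \<le> K - 1}" using q0 K1 by auto
    have "{q. q < n \<and> i ! q \<le> K - 1} \<subset> {..<n}" using s1 s2 by blast
    then have "card {q. q < n \<and> i ! q \<le> K - 1} < card {..<n}" by (intro psubset_card_mono) auto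
    then show ?thesis using sigc by simp
  qed
  have Sdc: "Sd n e = {p. \<exists>j\<le>K. p = sig e j \<and> 0 < p \<and> p < n}" using Sd_sig[OF g Kge] .
  define E where "E = insert bt (insert tp T)"
  have EP: "E \<subseteq> P" using TP btP tpP by (auto simp: E_def)
  have Ecmp: "x \<le> y \<or> y \<le> x" if "x \<in> E" "y \<in> E" for x y
  proof -
    have xy: "x \<in> P" "y \<in> P" using that EP by auto
    show ?thesis
    proof (cases "x \<in> T \<and> y \<in> T")
      case True then show ?thesis using Tc(1) by (simp add: is_chain_def)
    next
      case False
      then have "x = bt \<or> x = tp \<or> y = bt \<or> y = tp" using that by (auto simp: E_def)
      then show ?thesis using bnds[OF xy(1)] bnds[OF xy(2)] by (elim disjE) simp_all
    qed
  qed
  have Einj: "x = y" if "x \<in> E" "y \<in> E" "rk P x = rk P y" for x y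
  proof -
    have "x \<in> P" "y \<in> P" using that EP by auto
    then show ?thesis using rk_inj_cmp Ecmp[OF that(1,2)] that(3) by blast
  qed
  have Eex: "\<exists>x\<in>E. rk P x = sig e j" if "j \<le> K" for j
  proof (cases "sig e j = 0")
    case True then show ?thesis using rk_bt by (auto simp: E_def)
  next
    case F1: False
    show ?thesis
    proof (cases "sig e j = n")
      case True then show ?thesis using rk_tp by (auto simp: E_def)
    next
      case False
      then have "sig e j < n" using sigle[of j] by simp
      then have "sig e j \<in> Sd n e" using Sdc that F1 by auto
      then obtain x where "x \<in> T" "rk P x = sig e j" using Tc(3) by (metis imageE)
      then show ?thesis by (auto simp: E_def)
    qed
  qed
  define ts where "ts = map (\<lambda>j. THE x. x \<in> E \<and> rk P x = sig e j) [0..<Suc K]"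
  have len: "length ts = K + 1" by (simp add: ts_def)
  have tsj: "ts ! j \<in> E \<and> rk P (ts ! j) = sig e j" if jK: "j \<le> K" for j
  proof -
    have "ts ! j = (THE x. x \<in> E \<and> rk P x = sig e j)" using jK
      by (simp add: ts_def del: upt_Suc)
    moreover have ex1: "\<exists>!x. x \<in> E \<and> rk P x = sig e j"
    proof -
      obtain x where x: "x \<in> E" "rk P x = sig e j" using Eex[OF jK] by blast
      have "y = x" if "y \<in> E \<and> rk P y = sig e j" for y using Einj[of y x] that x by simp
      then show ?thesis using x by blast
    qed
    ultimately show ?thesis using theI'[OF ex1] by simp
  qed
  have tsu: "ts ! j = x" if "j \<le> K" "x \<in> E" "rk P x = sig e j" for j x
    using Einj[of "ts ! j" x] tsj[OF that(1)] that(2,3) by simp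
  have setts: "set ts \<subseteq> E"
  proof
    fix x assume "x \<in> set ts"
    then obtain j where "j < length ts" "x = ts ! j" by (metis in_set_conv_nth)
    then show "x \<in> E" using tsj len by auto
  qed
  have t0: "ts ! 0 = bt" using tsu[of 0 bt] rk_bt by (simp add: E_def)
  have tK: "ts ! K = tp" using tsu[of K tp] rk_tp sigK by (simp add: E_def)
  have mono: "\<forall>j. j + 1 < K \<longrightarrow> ts ! j \<le> ts ! (j + 1)"
  proof (intro allI impI)
    fix j assume j: "j + 1 < K"
    have a: "ts ! j \<in> E" "ts ! (j + 1) \<in> E" using tsj j by auto
    have "rk P (ts ! j) \<le> rk P (ts ! (j + 1))" using tsj j sig_mono[of j "j + 1" e] by auto
    moreover have "ts ! j \<in> P" "ts ! (j + 1) \<in> P" using a EP by auto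
    ultimately show "ts ! j \<le> ts ! (j + 1)" using rk_le_cmp Ecmp[OF a] by blast
  qed
  have last: "ts ! (K - 1) < ts ! K"
  proof -
    have a: "ts ! (K - 1) \<in> E" "rk P (ts ! (K - 1)) = sig e (K - 1)" using tsj by auto
    then have "ts ! (K - 1) \<noteq> tp" using sigK1 rk_tp by auto
    moreover have "ts ! (K - 1) \<le> tp" using bnds a EP by auto
    ultimately show ?thesis using tK by (simp add: order.order_iff_strict)
  qed
  have incr: "\<forall>j\<in>{1..K}. e j = rk P (ts ! j) - rk P (ts ! (j - 1))"
  proof
    fix j assume j: "j \<in> {1..K}"
    then obtain j' where j': "j = Suc j'" by (cases j) auto
    have "rk P (ts ! j) = sig e j" "rk P (ts ! (j - 1)) = sig e j'" using tsj j j' by auto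
    then show "e j = rk P (ts ! j) - rk P (ts ! (j - 1))" using j' by (simp add: sig_Suc)
  qed
  have sP: "set ts \<subseteq> P" using setts EP by blast
  have m: "mch e ts K" unfolding mch_def
    by (intro conjI len sP t0 tK mono last e0 incr eK)
  have gT: "gs ts = T"
  proof (intro set_eqI iffI)
    fix x assume "x \<in> gs ts"
    then have "x \<in> E" "bt < x" "x < tp" using setts by (auto simp: gs_def)
    then show "x \<in> T" by (auto simp: E_def)
  next
    fix x assume x: "x \<in> T"
    then have "rk P x \<in> Sd n e" using Tc(3) by blast
    then obtain j where j: "j \<le> K" "rk P x = sig e j" using Sdc by auto
    have "x \<in> E" using x by (simp add: E_def)
    then have "ts ! j = x" using tsu j by simp
    then have "x \<in> set ts" using j len by (metis le_imp_less_Suc nth_mem Suc_eq_plus1)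
    then show "x \<in> gs ts" using Tc(2) x by (simp add: gs_def)
  qed
  show ?thesis using K1 m gT by blast
qed

lemma FP_eval:
  assumes n1: "1 \<le> n"
  shows "FP P bt tp e = (if validl n e then int (flag_f P bt tp (Sd n e)) else 0)"
proof (cases "validl n e")
  case False
  have E0: "{ts. \<exists>k\<ge>1. mch e ts k} = {}"
  proof (rule equals0I)
    fix ts assume "ts \<in> {ts. \<exists>k\<ge>1. mch e ts k}"
    then obtain k where "mch e ts k" by auto
    then have "validl n e" using mch_valid by (auto simp: validl_def)
    then show False using False by simp
  qed
  have "FP P bt tp e = int (card {ts. \<exists>k\<ge>1. mch e ts k})" by (rule FP_alt)
  also have "{ts. \<exists>k\<ge>1. mch e ts k} = {}" by (rule E0)
  finally show ?thesis using False by simp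
next
  case True
  then obtain i where g: "goodl n i e" by (auto simp: validl_def)
  let ?F = "{ts. \<exists>k\<ge>1. mch e ts k}"
  have img: "gs ` ?F = CS (Sd n e)"
  proof
    show "gs ` ?F \<subseteq> CS (Sd n e)" using gs_CS g by blast
    show "CS (Sd n e) \<subseteq> gs ` ?F"
    proof
      fix T assume "T \<in> CS (Sd n e)"
      then obtain ts k where "1 \<le> k" "mch e ts k" "gs ts = T" using surj_gs[OF n1 g] by blast
      then show "T \<in> gs ` ?F" by blast
    qed
  qed
  have cF: "card (gs ` ?F) = card ?F" by (rule card_image[OF inj_gs[of e]])
  then have "card ?F = card (CS (Sd n e))" using img by simp
  then show ?thesis using True FP_alt flag_CS by simp
qed

end

lemma upper_zero:
  assumes A: "finite A" and h: "\<forall>T. T \<subseteq> A \<longrightarrow> (\<Sum>S\<in>{S\<in>Pow A. T \<subseteq> S}. g S) = (0::int)"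
  shows "T \<subseteq> A \<Longrightarrow> g T = 0"
proof (induction "card (A - T)" arbitrary: T rule: less_induct)
  case less
  have fin: "finite {S\<in>Pow A. T \<subset> S}" using A by simp
  have split: "{S\<in>Pow A. T \<subseteq> S} = insert T {S\<in>Pow A. T \<subset> S}" using less.prems by auto
  have z: "g S = 0" if S: "S \<in> {S\<in>Pow A. T \<subset> S}" for S
  proof -
    have SA: "S \<subseteq> A" "T \<subset> S" using S by auto
    then obtain x where x: "x \<in> S" "x \<notin> T" by blast
    have "A - S \<subset> A - T" using SA x by blast
    then have "card (A - S) < card (A - T)" using A by (intro psubset_card_mono) auto
    then show ?thesis using less.hyps SA(1) by blast
  qed
  have "(\<Sum>S\<in>{S\<in>Pow A. T \<subseteq> S}. g S) = g T + (\<Sum>S\<in>{S\<in>Pow A. T \<subset> S}. g S)"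
    unfolding split using fin by (subst sum.insert) auto
  also have "(\<Sum>S\<in>{S\<in>Pow A. T \<subset> S}. g S) = 0" using z by (intro sum.neutral) blast
  finally show ?case using h less.prems by simp
qed

lemma lower_zero:
  assumes A: "finite A" and h: "\<forall>T. T \<subseteq> A \<longrightarrow> (\<Sum>S\<in>Pow T. g S) = (0::int)"
  shows "T \<subseteq> A \<Longrightarrow> g T = 0"
proof (induction "card T" arbitrary: T rule: less_induct)
  case less
  have finT: "finite T" using less.prems A by (rule finite_subset)
  have fin: "finite (Pow T - {T})" using finT by simp
  have split: "Pow T = insert T (Pow T - {T})" by auto
  have z: "g S = 0" if S: "S \<in> Pow T - {T}" for S
  proof -
    have "S \<subset> T" using S by auto
    then have "card S < card T" using finT by (intro psubset_card_mono)
    then show ?thesis using less.hyps S less.prems by auto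
  qed
  have "(\<Sum>S\<in>Pow T. g S) = g T + (\<Sum>S\<in>Pow T - {T}. g S)"
    by (subst split, subst sum.insert) (use fin in auto)
  also have "(\<Sum>S\<in>Pow T - {T}. g S) = 0" using z by (intro sum.neutral) blast
  finally show ?case using h less.prems by simp
qed

lemma mobius_exists:
  "finite A \<Longrightarrow> \<exists>d. \<forall>U\<subseteq>A. f U = (\<Sum>S\<in>Pow U. d S :: int)"
proof (induction A arbitrary: f rule: finite_induct)
  case empty
  show ?case by (rule exI[of _ "\<lambda>_. f {}"]) auto
next
  case (insert a A)
  obtain d1 where d1: "\<forall>U\<subseteq>A. f U = (\<Sum>S\<in>Pow U. d1 S)" using insert.IH by blast
  obtain d2 where d2: "\<forall>U\<subseteq>A. f (insert a U) - f U = (\<Sum>S\<in>Pow U. d2 S)"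
    using insert.IH[of "\<lambda>U. f (insert a U) - f U"] by blast
  define d where "d S = (if a \<in> S then d2 (S - {a}) else d1 S)" for S
  have "f U = (\<Sum>S\<in>Pow U. d S)" if U: "U \<subseteq> insert a A" for U
  proof (cases "a \<in> U")
    case False
    then have UA: "U \<subseteq> A" using U by auto
    have "(\<Sum>S\<in>Pow U. d S) = (\<Sum>S\<in>Pow U. d1 S)"
      using False by (intro sum.cong) (auto simp: d_def)
    then show ?thesis using d1 UA by simp
  next
    case True
    define U' where "U' = U - {a}"
    have U'A: "U' \<subseteq> A" using U by (auto simp: U'_def)
    have aU': "a \<notin> U'" by (simp add: U'_def)
    have UU: "U = insert a U'" using True by (auto simp: U'_def)
    have finU': "finite U'" using U'A insert.hyps(1) by (rule finite_subset)
    have disj: "Pow U' \<inter> insert a ` Pow U' = {}" using aU' by auto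
    have inj: "inj_on (insert a) (Pow U')"
    proof (rule inj_onI)
      fix x y assume xy: "x \<in> Pow U'" "y \<in> Pow U'" "insert a x = insert a y"
      then have "insert a x - {a} = insert a y - {a}" by simp
      moreover have "a \<notin> x" "a \<notin> y" using xy aU' by auto
      ultimately show "x = y" by simp
    qed
    have "(\<Sum>S\<in>Pow U. d S) = (\<Sum>S\<in>Pow U'. d S) + (\<Sum>S\<in>insert a ` Pow U'. d S)"
      unfolding UU Pow_insert using finU' disj by (intro sum.union_disjoint) auto
    also have "(\<Sum>S\<in>Pow U'. d S) = (\<Sum>S\<in>Pow U'. d1 S)"
      using aU' by (intro sum.cong) (auto simp: d_def)
    also have "(\<Sum>S\<in>insert a ` Pow U'. d S) = (\<Sum>S\<in>Pow U'. d (insert a S))"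
      using inj by (rule sum.reindex[unfolded comp_def])
    also have "(\<Sum>S\<in>Pow U'. d (insert a S)) = (\<Sum>S\<in>Pow U'. d2 S)"
    proof (intro sum.cong refl)
      fix S assume "S \<in> Pow U'"
      then have "insert a S - {a} = S" using aU' by auto
      then show "d (insert a S) = d2 S" by (simp add: d_def)
    qed
    moreover have "f U' = (\<Sum>S\<in>Pow U'. d1 S)" using d1 U'A by blast
    moreover have "f (insert a U') - f U' = (\<Sum>S\<in>Pow U'. d2 S)" using d2 U'A by blast
    ultimately show ?thesis using UU by simp
  qed
  then show ?case by blast
qed

lemma fiber_sum:
  assumes M: "finite M" and A: "finite A" and g: "\<forall>m\<in>M. g m \<in> A"
  shows "(\<Sum>S\<in>{S\<in>A. Q S}. card {m\<in>M. g m = S}) = card {m\<in>M. Q (g m)}"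
proof -
  have f1: "finite {m\<in>M. Q (g m)}" using M by simp
  have f2: "finite {S\<in>A. Q S}" using A by simp
  have im: "g ` {m\<in>M. Q (g m)} \<subseteq> {S\<in>A. Q S}" using g by auto
  have "(\<Sum>y\<in>{S\<in>A. Q S}. sum (\<lambda>_. 1::nat) {x. x \<in> {m\<in>M. Q (g m)} \<and> g x = y})
      = sum (\<lambda>_. 1::nat) {m\<in>M. Q (g m)}"
    by (rule sum.group[OF f1 f2 im])
  moreover have "{x. x \<in> {m\<in>M. Q (g m)} \<and> g x = y} = {m\<in>M. g m = y}" if "y \<in> {S\<in>A. Q S}" for y
    using that by auto
  ultimately have "(\<Sum>y\<in>{S\<in>A. Q S}. card {m\<in>M. g m = y}) = card {m\<in>M. Q (g m)}"
    by (metis (no_types, lifting) card_eq_sum sum.cong)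
  then show ?thesis .
qed

lemma prod_chi:
  "(\<Prod>i\<leftarrow>w. if i \<in> S then -1 else (0::int)) = (if set w \<subseteq> S then (-1) ^ length w else 0)"
  by (induct w) auto

lemma chiS_eval:
  "set w \<subseteq> {1..<n} \<Longrightarrow> chiS n S w = (if set w \<subseteq> S then (-1) ^ length w else 0)"
  by (simp add: chiS_def prod_chi)

lemma sum_Lfun:
  "(\<Sum>S\<in>Pow {1..<n}. g S * Lfun S n e) = (if validl n e then (\<Sum>S\<in>Pow (Sd n e). g S) else 0)"
proof -
  have "(\<Sum>S\<in>Pow {1..<n}. g S * Lfun S n e)
      = (\<Sum>S\<in>Pow {1..<n}. if validl n e \<and> S \<subseteq> Sd n e then g S else 0)"
    by (intro sum.cong refl) (auto simp: Lfun_eval)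
  also have "\<dots> = (if validl n e then (\<Sum>S\<in>Pow (Sd n e). g S) else 0)"
  proof (cases "validl n e")
    case True
    have sub: "Sd n e \<subseteq> {1..<n}" by (auto simp: Sd_def)
    have "(\<Sum>S\<in>Pow {1..<n}. if S \<subseteq> Sd n e then g S else 0) = (\<Sum>S\<in>{S\<in>Pow {1..<n}. S \<subseteq> Sd n e}. g S)"
      by (rule sum.inter_filter[symmetric]) simp
    also have "{S\<in>Pow {1..<n}. S \<subseteq> Sd n e} = Pow (Sd n e)" using sub by auto
    finally show ?thesis using True by simp
  qed simp
  finally show ?thesis .
qed

lemma eT_exists:
  assumes T: "T \<subseteq> {1..<n}"
  shows "\<exists>e. validl n e \<and> Sd n e = T"
proof -
  define iT where "iT = map (\<lambda>p. Suc (card {t\<in>T. t \<le> p})) [0..<n]"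
  define e where "e = count_list iT"
  have finT: "finite T" using T by (rule finite_subset) simp
  have mono: "card {t\<in>T. t \<le> p} \<le> card {t\<in>T. t \<le> q}" if "p \<le> q" for p q
    using that finT by (intro card_mono) auto
  have g: "goodl n iT e"
    unfolding goodl_def
  proof (intro conjI allI impI)
    show "length iT = n" by (simp add: iT_def)
    fix j assume "j < n" then show "1 \<le> iT ! j" by (simp add: iT_def)
  next
    show "sorted iT" unfolding sorted_iff_nth_mono by (auto simp: iT_def intro: mono)
  next
    fix k show "count_list iT k = e k" by (simp add: e_def)
  qed
  have l: "lst n e = iT" using lst_eq[OF g] .
  have "Sd n e = T"
  proof (intro set_eqI iffI)
    fix p assume "p \<in> Sd n e"
    then have p: "1 \<le> p" "p < n" "iT ! (p - 1) < iT ! p" using l by (auto simp: Sd_def)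
    moreover have "[0..<n] ! (p - 1) = p - 1" using p by simp
    ultimately have lt: "card {t\<in>T. t \<le> p - 1} < card {t\<in>T. t \<le> p}" by (simp add: iT_def)
    show "p \<in> T"
    proof (rule ccontr)
      assume "p \<notin> T"
      have "x \<in> {t\<in>T. t \<le> p} \<longleftrightarrow> x \<in> {t\<in>T. t \<le> p - 1}" for x
        using \<open>p \<notin> T\<close> p by (cases "x = p") auto
      then have "{t\<in>T. t \<le> p} = {t\<in>T. t \<le> p - 1}" by blast
      then show False using lt by simp
    qed
  next
    fix p assume pT: "p \<in> T"
    then have p: "1 \<le> p" "p < n" using T by auto
    have "{t\<in>T. t \<le> p} = insert p {t\<in>T. t \<le> p - 1}" using pT p by auto
    moreover have "p \<notin> {t\<in>T. t \<le> p - 1}" using p by auto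
    ultimately have "card {t\<in>T. t \<le> p} = Suc (card {t\<in>T. t \<le> p - 1})" using finT by simp
    moreover have "[0..<n] ! (p - 1) = p - 1" using p by simp
    ultimately have "iT ! (p - 1) < iT ! p" using p by (simp add: iT_def)
    then show "p \<in> Sd n e" using p l by (simp add: Sd_def)
  qed
  then show ?thesis using g by (auto simp: validl_def)
qed

lemma indep_L:
  assumes h: "\<forall>e. (\<Sum>S\<in>Pow {1..<n}. a S * Lfun S n e) = (\<Sum>S\<in>Pow {1..<n}. b S * Lfun S n e)"
    and S: "S \<subseteq> {1..<n}"
  shows "a S = (b S :: int)"
proof -
  have z: "\<forall>T. T \<subseteq> {1..<n} \<longrightarrow> (\<Sum>U\<in>Pow T. a U - b U) = 0"
  proof (intro allI impI)
    fix T assume T: "T \<subseteq> {1..<n}"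
    obtain e where e: "validl n e" "Sd n e = T" using eT_exists[OF T] by blast
    have "(\<Sum>U\<in>Pow T. a U) = (\<Sum>U\<in>Pow T. b U)"
      using h[rule_format, of e] sum_Lfun[of a n e] sum_Lfun[of b n e] e by simp
    then show "(\<Sum>U\<in>Pow T. a U - b U) = 0" by (simp add: sum_subtractf)
  qed
  have "a S - b S = 0" using lower_zero[of "{1..<n}" "\<lambda>U. a U - b U" S] z S by simp
  then show ?thesis by simp
qed

lemma sum_chi:
  assumes w: "set w \<subseteq> {1..<n}"
  shows "(\<Sum>S\<in>Pow {1..<n}. a S * chiS n S w) = (-1) ^ length w * (\<Sum>S\<in>{S\<in>Pow {1..<n}. set w \<subseteq> S}. a S)"
proof -
  have "(\<Sum>S\<in>Pow {1..<n}. a S * chiS n S w)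
      = (\<Sum>S\<in>Pow {1..<n}. if set w \<subseteq> S then (-1) ^ length w * a S else 0)"
    using w by (intro sum.cong refl) (simp add: chiS_eval)
  also have "\<dots> = (\<Sum>S\<in>{S\<in>Pow {1..<n}. set w \<subseteq> S}. (-1) ^ length w * a S)"
    by (rule sum.inter_filter[symmetric]) simp
  also have "\<dots> = (-1) ^ length w * (\<Sum>S\<in>{S\<in>Pow {1..<n}. set w \<subseteq> S}. a S)"
    by (simp add: sum_distrib_left)
  finally show ?thesis .
qed

lemma indep_chi:
  assumes h: "\<forall>w. (\<Sum>S\<in>Pow {1..<n}. a S * chiS n S w) = (\<Sum>S\<in>Pow {1..<n}. b S * chiS n S w)"
    and S: "S \<subseteq> {1..<n}"
  shows "a S = (b S :: int)"
proof -
  have z: "\<forall>T. T \<subseteq> {1..<n} \<longrightarrow> (\<Sum>U\<in>{U\<in>Pow {1..<n}. T \<subseteq> U}. a U - b U) = 0"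
  proof (intro allI impI)
    fix T assume T: "T \<subseteq> {1..<n}"
    define w where "w = sorted_list_of_set T"
    have fT: "finite T" using T by (rule finite_subset) simp
    have sw: "set w = T" using fT by (simp add: w_def)
    have "(-1) ^ length w * (\<Sum>U\<in>{U\<in>Pow {1..<n}. T \<subseteq> U}. a U)
        = (-1) ^ length w * (\<Sum>U\<in>{U\<in>Pow {1..<n}. T \<subseteq> U}. b U)"
      using h[rule_format, of w] sum_chi[of w n a] sum_chi[of w n b] T sw by simp
    then have "(\<Sum>U\<in>{U\<in>Pow {1..<n}. T \<subseteq> U}. a U) = (\<Sum>U\<in>{U\<in>Pow {1..<n}. T \<subseteq> U}. b U)"
      by simp
    then show "(\<Sum>U\<in>{U\<in>Pow {1..<n}. T \<subseteq> U}. a U - b U) = 0" by (simp add: sum_subtractf)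
  qed
  have "a S - b S = 0" using upper_zero[of "{1..<n}" "\<lambda>U. a U - b U" S] z S by simp
  then show ?thesis by simp
qed

lemma (in gbp) flag_empty: "flag_f P bt tp {} = 1"
proof -
  have "CS {} = {{}}"
  proof (intro set_eqI iffI)
    fix T :: "'a set" assume "T \<in> CS {}"
    then have "is_chain P T" "card T = 0" by (auto simp: CS_def)
    then show "T \<in> {{}}" using chain_fin by auto
  next
    fix T :: "'a set" assume "T \<in> {{}}"
    then show "T \<in> CS {}" by (simp add: CS_def is_chain_def)
  qed
  then show ?thesis by (simp add: flag_CS)
qed

lemma (in gbp) mc0: "n = 0 \<Longrightarrow> MC P = {{bt}}"
proof -
  assume n0: "n = 0"
  have sub: "M = {bt}" if M: "M \<in> MC P" for M
  proof -
    have c: "card M = 1" using mccard[OF M] n0 by simp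
    then obtain x where x: "M = {x}" by (auto simp: card_Suc_eq)
    have mc: "maximal_chain P M" using M by (simp add: MC_def)
    then have xP: "x \<in> P" using x by (auto simp: maximal_chain_def is_chain_def)
    have "is_chain P (insert bt M)" using x xP btP bnds[OF xP] by (auto simp: is_chain_def)
    then have "insert bt M = M" using mc by (auto simp: maximal_chain_def)
    then show ?thesis using x by auto
  qed
  have "is_chain P {}" by (simp add: is_chain_def)
  then obtain M where "M \<in> MC P" using ext_max by blast
  then show ?thesis using sub by blast
qed

theorem mainTheorem10:
  fixes P :: "'a::order set" and n :: nat and bt tp :: 'a
    and U :: "nat \<Rightarrow> 'a set \<Rightarrow> 'a set"
  assumes "graded_bounded P n bt tp"
    and "bowtie_free P"
    and "good_action P n bt tp U"
  shows "(\<forall>S\<subseteq>{1..<n}. flag_f P bt tp S = card {m \<in> MC P. Des n U m \<subseteq> S})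
         \<and> card {m \<in> MC P. Des n U m = {}} = 1"
proof -
  interpret G: gbp P n bt tp using assms(1) by unfold_locales
  have GA1: "\<And>i m. i \<in> {1..<n} \<Longrightarrow> m \<in> MC P \<Longrightarrow> U i m \<in> MC P"
    using assms(3) by (simp add: good_action_def)
  have GA2: "\<And>i m. i \<in> {1..<n} \<Longrightarrow> m \<in> MC P \<Longrightarrow> U i (U i m) = U i m"
    using assms(3) by (simp add: good_action_def)
  have GA3: "\<And>i j m. i \<in> {1..<n} \<Longrightarrow> j \<in> {1..<n} \<Longrightarrow> m \<in> MC P \<Longrightarrow> i + 2 \<le> j \<Longrightarrow>
      U i (U j m) = U j (U i m)"
    using assms(3) unfolding good_action_def by blast
  have GA4: "\<And>i m. 1 \<le> i \<Longrightarrow> i + 1 < n \<Longrightarrow> m \<in> MC P \<Longrightarrow>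
      U i (U (i+1) (U i m)) = U (i+1) (U i (U (i+1) m))"
    using assms(3) unfolding good_action_def by blast
  have GA5: "omega n (FP P bt tp) = ch n (chiP n U (MC P))"
    using assms(3) unfolding good_action_def by blast
  have main: "flag_f P bt tp S = card {m \<in> MC P. Des n U m \<subseteq> S}" if S: "S \<subseteq> {1..<n}" for S
  proof (cases "n = 0")
    case True
    then have "S = {}" using S by auto
    moreover have "Des n U m = {}" for m using True by (simp add: Des_def)
    ultimately show ?thesis using G.flag_empty G.mc0[OF True] by simp
  next
    case False
    then have n1: "1 \<le> n" by simp
    define R where "R = {1..<n}"
    define M where "M = MC P"
    have finM: "finite M" using G.finMC by (simp add: M_def)
    define e' where "e' i m = (if m \<in> M then U i m else m)" for i m
    interpret H: hk e' n
    proof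
      fix i x assume i: "i \<in> {1..<n}"
      show "e' i (e' i x) = e' i x" using GA1[OF i] GA2[OF i] by (simp add: e'_def M_def)
    next
      fix i j x assume ij: "i \<in> {1..<n}" "j \<in> {1..<n}" "i + 2 \<le> j"
      show "e' i (e' j x) = e' j (e' i x)"
        using GA1[OF ij(1)] GA1[OF ij(2)] GA3[OF ij(1,2) _ ij(3)] by (simp add: e'_def M_def)
    next
      fix i x assume i: "1 \<le> i" "i + 1 < n"
      have r: "i \<in> {1..<n}" "i + 1 \<in> {1..<n}" using i by auto
      show "e' i (e' (i + 1) (e' i x)) = e' (i + 1) (e' i (e' (i + 1) x))"
        using GA1[OF r(1)] GA1[OF r(2)] GA4[OF i] by (simp add: e'_def M_def)
    qed
    have e'_in: "e' i x = U i x" if "x \<in> M" for i x using that by (simp add: e'_def)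
    have fold: "foldr (\<lambda>i f. U i \<circ> f) w id m = H.ec w m \<and> H.ec w m \<in> M"
      if "set w \<subseteq> R" "m \<in> M" for w m
      using that
    proof (induction w)
      case Nil then show ?case by simp
    next
      case (Cons i w)
      have w': "set w \<subseteq> R" and i: "i \<in> {1..<n}" using Cons.prems(1) by (auto simp: R_def)
      note IH = conjunct1[OF Cons.IH[OF w' Cons.prems(2)]] conjunct2[OF Cons.IH[OF w' Cons.prems(2)]]
      have "foldr (\<lambda>i f. U i \<circ> f) (i # w) id m = U i (foldr (\<lambda>i f. U i \<circ> f) w id m)" by simp
      also have "\<dots> = U i (H.ec w m)" by (simp only: IH(1))
      also have "\<dots> = H.ec (i # w) m" using e'_in[OF IH(2)] by simp
      finally have A: "foldr (\<lambda>i f. U i \<circ> f) (i # w) id m = H.ec (i # w) m" .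
      have "H.ec (i # w) m = U i (H.ec w m)" using e'_in[OF IH(2)] by simp
      then have "H.ec (i # w) m \<in> M" using GA1[OF i] IH(2) by (simp add: M_def)
      then show ?case using A by blast
    qed
    have allfix: "H.ec w m = m" if "\<forall>s\<in>set w. e' s m = m" for w m
      using that by (induct w) auto
    have fixiff: "(foldr (\<lambda>i f. U i \<circ> f) w id m = m) \<longleftrightarrow> set w \<subseteq> R - Des n U m"
      if w: "set w \<subseteq> R" and m: "m \<in> M" for w m
    proof
      assume "foldr (\<lambda>i f. U i \<circ> f) w id m = m"
      then have ec: "H.ec w m = m" using fold[OF w m] by simp
      have "U s m = m" if s: "s \<in> set w" for s
        using H.hk_fix[of w m s] ec s w e'_in[OF m] by (simp add: R_def)
      then show "set w \<subseteq> R - Des n U m" using w by (auto simp: Des_def)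
    next
      assume h: "set w \<subseteq> R - Des n U m"
      have "\<forall>s\<in>set w. e' s m = m" using h m by (auto simp: Des_def e'_def R_def)
      then have "H.ec w m = m" by (rule allfix)
      then show "foldr (\<lambda>i f. U i \<circ> f) w id m = m" using fold[OF w m] by simp
    qed
    define c where "c S = int (card {m\<in>M. R - Des n U m = S})" for S
    have DesR: "Des n U m \<subseteq> R" for m by (auto simp: Des_def R_def)
    have chi: "chiP n U M = (\<lambda>w. \<Sum>S\<in>Pow R. c S * chiS n S w)"
    proof
      fix w
      show "chiP n U M w = (\<Sum>S\<in>Pow R. c S * chiS n S w)"
      proof (cases "set w \<subseteq> R")
        case False
        then show ?thesis by (simp add: chiP_def chiS_def R_def)
      next
        case True
        have "(\<Sum>S\<in>Pow R. c S * chiS n S w) = (-1) ^ length w * (\<Sum>S\<in>{S\<in>Pow R. set w \<subseteq> S}. c S)"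
          using sum_chi[of w n c] True by (simp add: R_def)
        also have "(\<Sum>S\<in>{S\<in>Pow R. set w \<subseteq> S}. c S) = int (card {m\<in>M. set w \<subseteq> R - Des n U m})"
        proof -
          have "(\<Sum>S\<in>{S\<in>Pow R. set w \<subseteq> S}. card {m\<in>M. R - Des n U m = S})
              = card {m\<in>M. set w \<subseteq> R - Des n U m}"
            by (rule fiber_sum[OF finM]) (auto simp: R_def)
          then have "int (\<Sum>S\<in>{S\<in>Pow R. set w \<subseteq> S}. card {m\<in>M. R - Des n U m = S})
              = int (card {m\<in>M. set w \<subseteq> R - Des n U m})" by (rule arg_cong)
          then show ?thesis unfolding c_def by (simp only: of_nat_sum)
        qed
        also have "{m\<in>M. set w \<subseteq> R - Des n U m} = {m\<in>M. foldr (\<lambda>i f. U i \<circ> f) w id m = m}"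
          using fixiff[OF True] by blast
        finally show ?thesis using True by (simp add: chiP_def R_def)
      qed
    qed
    have chv: "ch n (chiP n U M) = (\<lambda>e. \<Sum>S\<in>Pow R. c S * Lfun S n e)"
      unfolding ch_def
    proof (rule the_equality)
      show "\<exists>c'. chiP n U M = (\<lambda>w. \<Sum>S\<in>Pow {1..<n}. c' S * chiS n S w) \<and>
          (\<lambda>e. \<Sum>S\<in>Pow R. c S * Lfun S n e) = (\<lambda>e. \<Sum>S\<in>Pow {1..<n}. c' S * Lfun S n e)"
        using chi by (auto simp: R_def)
    next
      fix G assume "\<exists>c'. chiP n U M = (\<lambda>w. \<Sum>S\<in>Pow {1..<n}. c' S * chiS n S w) \<and>
          G = (\<lambda>e. \<Sum>S\<in>Pow {1..<n}. c' S * Lfun S n e)"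
      then obtain c' where c': "chiP n U M = (\<lambda>w. \<Sum>S\<in>Pow {1..<n}. c' S * chiS n S w)"
        "G = (\<lambda>e. \<Sum>S\<in>Pow {1..<n}. c' S * Lfun S n e)" by blast
      have "\<forall>w. (\<Sum>S\<in>Pow {1..<n}. c' S * chiS n S w) = (\<Sum>S\<in>Pow {1..<n}. c S * chiS n S w)"
        using c'(1) chi by (simp add: R_def fun_eq_iff)
      then have "c' S = c S" if "S \<in> Pow {1..<n}" for S using indep_chi that by blast
      then show "G = (\<lambda>e. \<Sum>S\<in>Pow R. c S * Lfun S n e)"
        using c'(2) by (auto simp: R_def fun_eq_iff intro: sum.cong)
    qed
    obtain d where d: "\<forall>T\<subseteq>R. int (flag_f P bt tp T) = (\<Sum>S\<in>Pow T. d S)"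
      using mobius_exists[of R "\<lambda>T. int (flag_f P bt tp T)"] by (auto simp: R_def)
    have fp: "FP P bt tp = (\<lambda>e. \<Sum>S\<in>Pow R. d S * Lfun S n e)"
    proof
      fix e
      have SdR: "Sd n e \<subseteq> R" by (auto simp: Sd_def R_def)
      have "(\<Sum>S\<in>Pow R. d S * Lfun S n e) = (if validl n e then (\<Sum>S\<in>Pow (Sd n e). d S) else 0)"
        using sum_Lfun[of d n e] by (simp add: R_def)
      also have "\<dots> = FP P bt tp e" using G.FP_eval[OF n1, of e] d SdR by simp
      finally show "FP P bt tp e = (\<Sum>S\<in>Pow R. d S * Lfun S n e)" by simp
    qed
    have om: "omega n (FP P bt tp) = (\<lambda>e. \<Sum>S\<in>Pow R. d S * Lfun (R - S) n e)"
      unfolding omega_def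
    proof (rule the_equality)
      show "\<exists>d'. FP P bt tp = (\<lambda>e. \<Sum>S\<in>Pow {1..<n}. d' S * Lfun S n e) \<and>
          (\<lambda>e. \<Sum>S\<in>Pow R. d S * Lfun (R - S) n e) = (\<lambda>e. \<Sum>S\<in>Pow {1..<n}. d' S * Lfun ({1..<n} - S) n e)"
        using fp by (auto simp: R_def)
    next
      fix G assume "\<exists>d'. FP P bt tp = (\<lambda>e. \<Sum>S\<in>Pow {1..<n}. d' S * Lfun S n e) \<and>
          G = (\<lambda>e. \<Sum>S\<in>Pow {1..<n}. d' S * Lfun ({1..<n} - S) n e)"
      then obtain d' where d': "FP P bt tp = (\<lambda>e. \<Sum>S\<in>Pow {1..<n}. d' S * Lfun S n e)"
        "G = (\<lambda>e. \<Sum>S\<in>Pow {1..<n}. d' S * Lfun ({1..<n} - S) n e)" by blast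
      have "\<forall>e. (\<Sum>S\<in>Pow {1..<n}. d' S * Lfun S n e) = (\<Sum>S\<in>Pow {1..<n}. d S * Lfun S n e)"
        using d'(1) fp by (simp add: R_def fun_eq_iff)
      then have "d' S = d S" if "S \<in> Pow {1..<n}" for S using indep_L that by blast
      then show "G = (\<lambda>e. \<Sum>S\<in>Pow R. d S * Lfun (R - S) n e)"
        using d'(2) by (auto simp: R_def fun_eq_iff intro: sum.cong)
    qed
    have reidx: "(\<Sum>S\<in>Pow R. d S * Lfun (R - S) n e) = (\<Sum>S\<in>Pow R. d (R - S) * Lfun S n e)" for e
      by (rule sum.reindex_bij_witness[of _ "\<lambda>S. R - S" "\<lambda>S. R - S"]) (auto simp: Diff_Diff_Int Int_absorb1)
    have eq: "\<forall>e. (\<Sum>S\<in>Pow {1..<n}. d ({1..<n} - S) * Lfun S n e) = (\<Sum>S\<in>Pow {1..<n}. c S * Lfun S n e)"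
    proof
      fix e
      have "(\<lambda>e. \<Sum>S\<in>Pow R. d S * Lfun (R - S) n e) = (\<lambda>e. \<Sum>S\<in>Pow R. c S * Lfun S n e)"
        using GA5 om chv by (simp add: M_def)
      then have "(\<Sum>S\<in>Pow R. d S * Lfun (R - S) n e) = (\<Sum>S\<in>Pow R. c S * Lfun S n e)" by metis
      then show "(\<Sum>S\<in>Pow {1..<n}. d ({1..<n} - S) * Lfun S n e) = (\<Sum>S\<in>Pow {1..<n}. c S * Lfun S n e)"
        using reidx[of e] by (simp add: R_def)
    qed
    have dS: "d T = int (card {m\<in>M. Des n U m = T})" if T: "T \<subseteq> R" for T
    proof -
      have "d ({1..<n} - (R - T)) = c (R - T)"
        using indep_L[OF eq, of "R - T"] by (simp add: R_def)
      moreover have "{1..<n} - (R - T) = T" using T by (auto simp: R_def)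
      moreover have "{m\<in>M. R - Des n U m = R - T} = {m\<in>M. Des n U m = T}"
      proof -
        have "R - Des n U m = R - T \<longleftrightarrow> Des n U m = T" for m
          using DesR[of m] T by blast
        then show ?thesis by simp
      qed
      ultimately show ?thesis by (simp add: c_def)
    qed
    obtain e where e: "validl n e" "Sd n e = S" using eT_exists[OF S] by blast
    have "int (flag_f P bt tp S) = FP P bt tp e" using G.FP_eval[OF n1, of e] e by simp
    also have "\<dots> = (\<Sum>T\<in>Pow S. d T)"
      using fp sum_Lfun[of d n e] e by (simp add: R_def)
    also have "\<dots> = (\<Sum>T\<in>Pow S. int (card {m\<in>M. Des n U m = T}))"
      using dS S by (intro sum.cong refl) (auto simp: R_def)
    also have "\<dots> = int (card {m\<in>M. Des n U m \<subseteq> S})"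
    proof -
      have "(\<Sum>T\<in>{T\<in>Pow R. T \<subseteq> S}. card {m\<in>M. Des n U m = T}) = card {m\<in>M. Des n U m \<subseteq> S}"
        by (rule fiber_sum[OF finM]) (use DesR in \<open>auto simp: R_def\<close>)
      moreover have "{T\<in>Pow R. T \<subseteq> S} = Pow S" using S by (auto simp: R_def)
      ultimately show ?thesis by (simp flip: of_nat_sum)
    qed
    finally show ?thesis by (simp add: M_def)
  qed
  have "card {m \<in> MC P. Des n U m = {}} = 1"
    using main[of "{}"] G.flag_empty by simp
  then show ?thesis using main by blast
qed

end
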